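(* Let $\Phi$ satisfy (C.1)--(C.3). Any crossover design which is $\phi_1$-optimal for $\Phi$ under the model with independent homoscedastic errors is still $\phi_1$-optimal for the same $\Phi$ when the within-subject covariance matrix of the errors is of the form $\Sigma=I_p+\eta1_p'+1_p\eta'$ for an arbitrary vector $\eta\in\mathbb R^p$ (in particular for compound symmetry $\Sigma=I_p+bJ_p$, $b\in\mathbb R$).
   Context: A crossover design $d$ with $p$ periods, $t$ treatments, $n$ subjects assigns treatment $d(k,u)$ to subject $u$ in period $k$; responses follow $Y_d=1_{np}\mu+Z\pi+U\varsigma+T_d\tau+F_d\gamma+\varepsilon$, with $Z=1_n\otimes I_p$, $U=I_n\otimes1_p$, $T_d$ the treatment incidence matrix and $F_d$ the carryover incidence matrix (rows ordered by subject then period; carryover row in period 1 is zero). Dropout: $l_u\in\{1,\dots,p\}$ is the number of periods subject $u$ stays (no re-entry), $l_1,\dots,l_n$ i.i.d. with $P(l_u=k)=a_k$, independent of design and outcomes; only the first $l_u$ responses of subject $u$ are observed. $I^k_{ij}$ is the $i\times j$ matrix with $I_k$ in its upper-left block, zeros elsewhere; $M=\mathrm{diag}(I^{l_1}_{l_1p},\dots,I^{l_n}_{l_np})$; $\mathrm{pr}^\perp(G)=I-G(G'G)^-G'$. The within-subject error covariance is a positive definite $p\times p$ matrix $\Sigma$ (errors of distinct subjects independent); $\Sigma_k$ is its upper-left $k\times k$ submatrix and $W=\mathrm{diag}(\Sigma_{l_1}^{-1},\dots,\Sigma_{l_n}^{-1})$. Define $O_\Sigma=M'W^{1/2}\mathrm{pr}^\perp([W^{1/2}MZ|W^{1/2}MU])W^{1/2}M$,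 $C_{d11}(l)=T_d'O_\Sigma T_d$, $C_{d12}(l)=T_d'O_\Sigma F_d=C_{d21}(l)'$, $C_{d22}(l)=F_d'O_\Sigma F_d$, $C_{dij}=\mathbb E\,C_{dij}(l)$ and $C_d=C_{d11}-C_{d12}C_{d22}^-C_{d21}$; the homoscedastic model is $\Sigma=I_p$. A criterion $\Phi$ is a real function on $t\times t$ nonnegative definite matrices with (C.1) concave, (C.2) $\Phi(S'CS)=\Phi(C)$ for permutation matrices $S$, (C.3) $b\mapsto\Phi(bC)$ nondecreasing on $b>0$. $\phi_1(d)=\Phi(C_d)$; a design is $\phi_1$-optimal if it maximizes $\phi_1$ over all designs with the same $p,t,n$ and dropout distribution. *)

theory Defs
  imports "Jordan_Normal_Form.Matrix" "HOL-Combinatorics.Permutations"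
begin

text \<open>Indices start at 0: periods k < p, subjects u < n, treatments in {0..<t}.
  Rows of np-row matrices are ordered by subject then period: row u*p+k.\<close>

definition nnd_mat :: "nat \<Rightarrow> real mat \<Rightarrow> bool" where
  "nnd_mat m A \<longleftrightarrow> A \<in> carrier_mat m m \<and> transpose_mat A = A \<and>
     (\<forall>v \<in> carrier_vec m. v \<bullet> (A *\<^sub>v v) \<ge> 0)"

definition pd_mat :: "nat \<Rightarrow> real mat \<Rightarrow> bool" where
  "pd_mat m A \<longleftrightarrow> A \<in> carrier_mat m m \<and> transpose_mat A = A \<and>
     (\<forall>v \<in> carrier_vec m. v \<noteq> 0\<^sub>v m \<longrightarrow> v \<bullet> (A *\<^sub>v v) > 0)"

definition minv :: "real mat \<Rightarrow> real mat" where
  "minv A = (SOME B. B \<in> carrier_mat (dim_row A) (dim_row A) \<and>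
      A * B = 1\<^sub>m (dim_row A) \<and> B * A = 1\<^sub>m (dim_row A))"

definition ginv :: "real mat \<Rightarrow> real mat" where
  "ginv A = (SOME G. G \<in> carrier_mat (dim_col A) (dim_row A) \<and> A * G * A = A)"

definition msqrt :: "real mat \<Rightarrow> real mat" where
  "msqrt A = (SOME S. nnd_mat (dim_row A) S \<and> S * S = A)"

definition pr_perp :: "real mat \<Rightarrow> real mat" where
  "pr_perp G = 1\<^sub>m (dim_row G) - G * ginv (transpose_mat G * G) * transpose_mat G"

definition hcat :: "real mat \<Rightarrow> real mat \<Rightarrow> real mat" where
  "hcat A B = mat (dim_row A) (dim_col A + dim_col B)
     (\<lambda>(i,j). if j < dim_col A then A $$ (i,j) else B $$ (i, j - dim_col A))"

definition Ik :: "nat \<Rightarrow> nat \<Rightarrow> nat \<Rightarrow> real mat" where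
  "Ik k i j = mat i j (\<lambda>(r,c). if r = c \<and> r < k then 1 else 0)"

definition ulsub :: "nat \<Rightarrow> real mat \<Rightarrow> real mat" where
  "ulsub k A = mat k k (\<lambda>(i,j). A $$ (i,j))"

definition Zmat :: "nat \<Rightarrow> nat \<Rightarrow> real mat" where
  "Zmat n p = mat (n*p) p (\<lambda>(r,c). if r mod p = c then 1 else 0)"

definition Umat :: "nat \<Rightarrow> nat \<Rightarrow> real mat" where
  "Umat n p = mat (n*p) n (\<lambda>(r,c). if r div p = c then 1 else 0)"

text \<open>treatment and carryover incidence matrices of design d\<close>
definition Tmat :: "nat \<Rightarrow> nat \<Rightarrow> nat \<Rightarrow> (nat \<Rightarrow> nat \<Rightarrow> nat) \<Rightarrow> real mat" where
  "Tmat p t n d = mat (n*p) t (\<lambda>(r,c). if d (r mod p) (r div p) = c then 1 else 0)"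

definition Fmat :: "nat \<Rightarrow> nat \<Rightarrow> nat \<Rightarrow> (nat \<Rightarrow> nat \<Rightarrow> nat) \<Rightarrow> real mat" where
  "Fmat p t n d = mat (n*p) t (\<lambda>(r,c).
     if r mod p \<noteq> 0 \<and> d (r mod p - 1) (r div p) = c then 1 else 0)"

definition Mmat :: "nat \<Rightarrow> nat \<Rightarrow> (nat \<Rightarrow> nat) \<Rightarrow> real mat" where
  "Mmat p n l = diag_block_mat (map (\<lambda>u. Ik (l u) (l u) p) [0..<n])"

definition Wmat :: "real mat \<Rightarrow> nat \<Rightarrow> (nat \<Rightarrow> nat) \<Rightarrow> real mat" where
  "Wmat \<Sigma> n l = diag_block_mat (map (\<lambda>u. minv (ulsub (l u) \<Sigma>)) [0..<n])"

definition Omat :: "real mat \<Rightarrow> nat \<Rightarrow> nat \<Rightarrow> (nat \<Rightarrow> nat) \<Rightarrow> real mat" where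
  "Omat \<Sigma> p n l = (let M = Mmat p n l; Wh = msqrt (Wmat \<Sigma> n l) in
     transpose_mat M * Wh * pr_perp (hcat (Wh * M * Zmat n p) (Wh * M * Umat n p)) * Wh * M)"

definition Cl :: "real mat \<Rightarrow> nat \<Rightarrow> nat \<Rightarrow> nat \<Rightarrow> (nat \<Rightarrow> nat \<Rightarrow> nat) \<Rightarrow> nat \<Rightarrow> nat
    \<Rightarrow> (nat \<Rightarrow> nat) \<Rightarrow> real mat" where
  "Cl \<Sigma> p t n d i j l = (let X = (\<lambda>k. if k = 1 then Tmat p t n d else Fmat p t n d) in
     transpose_mat (X i) * Omat \<Sigma> p n l * X j)"

text \<open>Expectation over i.i.d. dropout l_1..l_n with P(l_u = k) = a k, k in {1..p}
  (subject u is index u-1 here).\<close>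
definition Cexp :: "real mat \<Rightarrow> nat \<Rightarrow> nat \<Rightarrow> nat \<Rightarrow> (nat \<Rightarrow> real) \<Rightarrow> (nat \<Rightarrow> nat \<Rightarrow> nat)
    \<Rightarrow> nat \<Rightarrow> nat \<Rightarrow> real mat" where
  "Cexp \<Sigma> p t n a d i j = mat t t (\<lambda>(r,c).
     \<Sum>l \<in> PiE {0..<n} (\<lambda>_. {1..p}). (\<Prod>u<n. a (l u)) * Cl \<Sigma> p t n d i j l $$ (r,c))"

definition Cd :: "real mat \<Rightarrow> nat \<Rightarrow> nat \<Rightarrow> nat \<Rightarrow> (nat \<Rightarrow> real) \<Rightarrow> (nat \<Rightarrow> nat \<Rightarrow> nat) \<Rightarrow> real mat" where
  "Cd \<Sigma> p t n a d = Cexp \<Sigma> p t n a d 1 1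
     - Cexp \<Sigma> p t n a d 1 2 * ginv (Cexp \<Sigma> p t n a d 2 2) * Cexp \<Sigma> p t n a d 2 1"

definition is_design :: "nat \<Rightarrow> nat \<Rightarrow> nat \<Rightarrow> (nat \<Rightarrow> nat \<Rightarrow> nat) \<Rightarrow> bool" where
  "is_design p t n d \<longleftrightarrow> (\<forall>k<p. \<forall>u<n. d k u < t)"

definition dropout_dist :: "nat \<Rightarrow> (nat \<Rightarrow> real) \<Rightarrow> bool" where
  "dropout_dist p a \<longleftrightarrow> (\<forall>k\<in>{1..p}. a k \<ge> 0) \<and> (\<Sum>k=1..p. a k) = 1"

definition perm_mat :: "nat \<Rightarrow> (nat \<Rightarrow> nat) \<Rightarrow> real mat" where
  "perm_mat t \<sigma> = mat t t (\<lambda>(i,j). if \<sigma> i = j then 1 else 0)"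

definition criterion :: "nat \<Rightarrow> (real mat \<Rightarrow> real) \<Rightarrow> bool" where
  "criterion t \<Phi> \<longleftrightarrow>
     (\<forall>A B w. nnd_mat t A \<and> nnd_mat t B \<and> 0 \<le> w \<and> w \<le> 1 \<longrightarrow>
        w * \<Phi> A + (1 - w) * \<Phi> B \<le> \<Phi> (w \<cdot>\<^sub>m A + (1 - w) \<cdot>\<^sub>m B)) \<and>
     (\<forall>C \<sigma>. nnd_mat t C \<and> \<sigma> permutes {0..<t} \<longrightarrow>
        \<Phi> (transpose_mat (perm_mat t \<sigma>) * C * perm_mat t \<sigma>) = \<Phi> C) \<and>
     (\<forall>C b b'. nnd_mat t C \<and> 0 < b \<and> b \<le> b' \<longrightarrow> \<Phi> (b \<cdot>\<^sub>m C) \<le> \<Phi> (b' \<cdot>\<^sub>m C))"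

definition phi1_optimal :: "(real mat \<Rightarrow> real) \<Rightarrow> real mat \<Rightarrow> nat \<Rightarrow> nat \<Rightarrow> nat \<Rightarrow> (nat \<Rightarrow> real)
    \<Rightarrow> (nat \<Rightarrow> nat \<Rightarrow> nat) \<Rightarrow> bool" where
  "phi1_optimal \<Phi> \<Sigma> p t n a d \<longleftrightarrow> is_design p t n d \<and>
     (\<forall>d'. is_design p t n d' \<longrightarrow> \<Phi> (Cd \<Sigma> p t n a d') \<le> \<Phi> (Cd \<Sigma> p t n a d))"

end

theory Submission
  imports Defs "Jordan_Normal_Form.Spectral_Radius"
begin

lemma sym_real_eigen:
  fixes A :: "real mat"
  assumes A: "A \<in> carrier_mat n n" and sym: "transpose_mat A = A" and n: "n > 0"
  shows "\<exists>lam v. v \<in> carrier_vec n \<and> v \<noteq> 0\<^sub>v n \<and> A *\<^sub>v v = lam \<cdot>\<^sub>v v"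
proof -
  define Ac where "Ac = map_mat complex_of_real A"
  have Ac: "Ac \<in> carrier_mat n n" using A unfolding Ac_def by auto
  from spectrum_non_empty[OF Ac n] obtain k where "k \<in> spectrum Ac" by auto
  then obtain v where ev: "eigenvector Ac v k" unfolding spectrum_def eigenvalue_def by auto
  hence v: "v \<in> carrier_vec n" and v0: "v \<noteq> 0\<^sub>v n" and eq: "Ac *\<^sub>v v = k \<cdot>\<^sub>v v"
    unfolding eigenvector_def using Ac by auto
  have symA: "\<And>i j. i < n \<Longrightarrow> j < n \<Longrightarrow> A $$ (i,j) = A $$ (j,i)"
    using sym A by (metis carrier_matD index_transpose_mat(1))
  have eqi: "(\<Sum>j<n. complex_of_real (A $$ (i,j)) * v $ j) = k * v $ i" if i: "i < n" for i
  proof -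
    have "(Ac *\<^sub>v v) $ i = (k \<cdot>\<^sub>v v) $ i" using eq by simp
    thus ?thesis using i v A unfolding Ac_def
      by (auto simp: scalar_prod_def lessThan_atLeast0)
  qed
  define N where "N = (\<Sum>i<n. cnj (v $ i) * v $ i)"
  define s where "s = (\<Sum>i<n. cnj (v $ i) * (\<Sum>j<n. complex_of_real (A $$ (i,j)) * v $ j))"
  have sN: "s = k * N" unfolding s_def N_def using eqi
    by (simp add: sum_distrib_left mult.commute mult.left_commute)
  have "cnj s = (\<Sum>i<n. v $ i * (\<Sum>j<n. complex_of_real (A $$ (i,j)) * cnj (v $ j)))"
    unfolding s_def by (simp add: cnj_sum)
  also have "\<dots> = (\<Sum>i<n. \<Sum>j<n. complex_of_real (A $$ (i,j)) * cnj (v $ j) * v $ i)"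
    by (simp add: sum_distrib_left mult.commute mult.left_commute)
  also have "\<dots> = (\<Sum>j<n. \<Sum>i<n. complex_of_real (A $$ (i,j)) * cnj (v $ j) * v $ i)"
    by (rule sum.swap)
  also have "\<dots> = s" unfolding s_def
    by (auto simp: sum_distrib_left symA mult.commute mult.left_commute intro!: sum.cong)
  finally have cs: "cnj s = s" .
  have Nre: "N = complex_of_real (\<Sum>i<n. (cmod (v $ i))^2)"
    unfolding N_def of_real_sum
    by (intro sum.cong refl) (simp add: complex_norm_square[symmetric] mult.commute)
  obtain i0 where i0: "i0 < n" "v $ i0 \<noteq> 0" using v0 v by (metis eq_vecI carrier_vecD index_zero_vec)
  have Npos: "(\<Sum>i<n. (cmod (v $ i))^2) > 0"
  proof -
    have "(\<Sum>i<n. (cmod (v $ i))^2) \<ge> (cmod (v $ i0))^2"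
      using i0 by (intro member_le_sum) auto
    moreover have "(cmod (v $ i0))^2 > 0" using i0 by auto
    ultimately show ?thesis by linarith
  qed
  have "Im s = 0" using cs by (metis cnj.simps(2) neg_equal_zero)
  hence "Im k * (\<Sum>i<n. (cmod (v $ i))^2) = 0" using sN Nre by simp
  hence imk: "Im k = 0" using Npos by simp
  define w1 where "w1 = vec n (\<lambda>i. Re (v $ i))"
  define w2 where "w2 = vec n (\<lambda>i. Im (v $ i))"
  have re: "(\<Sum>j<n. A $$ (i,j) * Re (v $ j)) = Re k * Re (v $ i)" if "i < n" for i
    using arg_cong[OF eqi[OF that], of Re] imk by (simp add: Re_sum)
  have im: "(\<Sum>j<n. A $$ (i,j) * Im (v $ j)) = Re k * Im (v $ i)" if "i < n" for i
    using arg_cong[OF eqi[OF that], of Im] imk by (simp add: Im_sum)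
  have e1: "A *\<^sub>v w1 = Re k \<cdot>\<^sub>v w1"
    by (rule eq_vecI, insert A re, auto simp: w1_def scalar_prod_def lessThan_atLeast0)
  have e2: "A *\<^sub>v w2 = Re k \<cdot>\<^sub>v w2"
    by (rule eq_vecI, insert A im, auto simp: w2_def scalar_prod_def lessThan_atLeast0)
  have "w1 \<noteq> 0\<^sub>v n \<or> w2 \<noteq> 0\<^sub>v n"
  proof (rule ccontr)
    assume "\<not> ?thesis"
    hence "w1 $ i0 = 0" "w2 $ i0 = 0" using i0 by auto
    thus False using i0 unfolding w1_def w2_def by (auto simp: complex_eq_iff)
  qed
  thus ?thesis using e1 e2 unfolding w1_def w2_def by (meson vec_carrier)
qed

definition hh :: "nat \<Rightarrow> real vec \<Rightarrow> real mat" where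
  "hh n w = mat n n (\<lambda>(i,j). (if i = j then 1 else 0) - (2 / (w \<bullet> w)) * w $ i * w $ j)"

lemma mult_unit_entry:
  assumes M: "M \<in> carrier_mat n m" and i: "i < n" and j: "j < m"
  shows "(M *\<^sub>v unit_vec m j) $ i = (M $$ (i,j) :: 'a :: comm_ring_1)"
proof -
  have "(M *\<^sub>v unit_vec m j) $ i = row M i \<bullet> unit_vec m j" using M i by auto
  also have "\<dots> = row M i $ j" by (rule scalar_prod_right_unit[OF j])
  also have "\<dots> = M $$ (i,j)" using M i j by auto
  finally show ?thesis .
qed

lemma self_scalar_zero:
  fixes w :: "real vec"
  assumes w: "w \<in> carrier_vec n" and z: "w \<bullet> w = 0"
  shows "w = 0\<^sub>v n"
proof -
  have "(\<Sum>i\<in>{0..<n}. w $ i * w $ i) = 0" using z w by (simp add: scalar_prod_def)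
  hence "\<forall>i\<in>{0..<n}. w $ i * w $ i = 0" by (subst (asm) sum_nonneg_eq_0_iff) auto
  thus ?thesis using w by (auto intro!: eq_vecI)
qed

lemma hh_carrier[simp]: "hh n w \<in> carrier_mat n n" unfolding hh_def by auto

lemma hh_transpose: "transpose_mat (hh n w) = hh n w"
  unfolding hh_def by (rule eq_matI) auto

lemma hh_mult_vec:
  assumes w: "w \<in> carrier_vec n" and x: "x \<in> carrier_vec n"
  shows "hh n w *\<^sub>v x = x - ((2 / (w \<bullet> w)) * (w \<bullet> x)) \<cdot>\<^sub>v w"
proof (rule eq_vecI)
  fix i assume i: "i < dim_vec (x - ((2 / (w \<bullet> w)) * (w \<bullet> x)) \<cdot>\<^sub>v w)"
  hence i: "i < n" using x w by auto
  have "(hh n w *\<^sub>v x) $ i = (\<Sum>j<n. ((if i = j then 1 else 0) - (2 / (w \<bullet> w)) * w $ i * w $ j) * x $ j)"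
    using i w x by (simp add: hh_def scalar_prod_def lessThan_atLeast0)
  also have "\<dots> = (\<Sum>j<n. (if i = j then x $ j else 0)) - (\<Sum>j<n. (2 / (w \<bullet> w)) * w $ i * (w $ j * x $ j))"
    by (subst sum_subtractf[symmetric], rule sum.cong, auto simp: algebra_simps)
  also have "\<dots> = x $ i - (2 / (w \<bullet> w)) * w $ i * (\<Sum>j<n. w $ j * x $ j)"
    using i by (simp add: sum_distrib_left)
  also have "\<dots> = (x - ((2 / (w \<bullet> w)) * (w \<bullet> x)) \<cdot>\<^sub>v w) $ i"
    using i w x by (simp add: scalar_prod_def lessThan_atLeast0)
  finally show "(hh n w *\<^sub>v x) $ i = (x - ((2 / (w \<bullet> w)) * (w \<bullet> x)) \<cdot>\<^sub>v w) $ i" .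
qed (insert x w, auto simp: hh_def)

lemma hh_hh_vec:
  assumes w: "w \<in> carrier_vec n" and x: "x \<in> carrier_vec n"
  shows "hh n w *\<^sub>v (hh n w *\<^sub>v x) = x"
proof -
  define c where "c = 2 / (w \<bullet> w)"
  define a where "a = c * (w \<bullet> x)"
  have 1: "hh n w *\<^sub>v x = x - a \<cdot>\<^sub>v w" using hh_mult_vec[OF w x] unfolding a_def c_def .
  have xa: "x - a \<cdot>\<^sub>v w \<in> carrier_vec n" using w x by auto
  have "hh n w *\<^sub>v (x - a \<cdot>\<^sub>v w) = (x - a \<cdot>\<^sub>v w) - (c * (w \<bullet> (x - a \<cdot>\<^sub>v w))) \<cdot>\<^sub>v w"
    using hh_mult_vec[OF w xa] unfolding c_def .
  also have "w \<bullet> (x - a \<cdot>\<^sub>v w) = w \<bullet> x - a * (w \<bullet> w)"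
    using w x by (simp add: scalar_prod_minus_distrib)
  also have "c * (w \<bullet> x - a * (w \<bullet> w)) = - a"
  proof (cases "w \<bullet> w = 0")
    case True thus ?thesis unfolding a_def c_def by simp
  next
    case False thus ?thesis unfolding a_def c_def by (simp add: field_simps)
  qed
  finally show ?thesis using 1 w x by (auto intro!: eq_vecI)
qed

lemma hh_hh: assumes w: "w \<in> carrier_vec n" shows "hh n w * hh n w = 1\<^sub>m n"
proof (rule eq_matI)
  fix i j assume i: "i < dim_row (1\<^sub>m n)" and j: "j < dim_col (1\<^sub>m n)"
  hence i: "i < n" and j: "j < n" by auto
  have "(hh n w * hh n w) $$ (i,j) = ((hh n w * hh n w) *\<^sub>v unit_vec n j) $ i"
    using mult_unit_entry[OF mult_carrier_mat[OF hh_carrier hh_carrier] i j] by simp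
  also have "\<dots> = unit_vec n j $ i"
    using hh_hh_vec[OF w, of "unit_vec n j"] w
    by (subst assoc_mult_mat_vec[of _ n n _ n]) auto
  finally show "(hh n w * hh n w) $$ (i,j) = 1\<^sub>m n $$ (i,j)" using i j by simp
qed (auto simp: hh_def)

lemma hh_e0:
  assumes u: "u \<in> carrier_vec n" and uu: "u \<bullet> u = 1" and n: "0 < n"
  shows "hh n (u - unit_vec n 0) *\<^sub>v unit_vec n 0 = u"
proof -
  define w where "w = u - unit_vec n 0"
  have w: "w \<in> carrier_vec n" using u unfolding w_def by auto
  have we: "w \<bullet> unit_vec n 0 = u $ 0 - 1" unfolding w_def using u n
    by (simp add: scalar_prod_minus_distrib)
  have e: "unit_vec n 0 \<in> carrier_vec n" by simp
  have "w \<bullet> w = u \<bullet> w - unit_vec n 0 \<bullet> w"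
    unfolding w_def[of] by (rule minus_scalar_prod_distrib[OF u e], insert w, simp add: w_def)
  also have "u \<bullet> w = u \<bullet> u - u \<bullet> unit_vec n 0"
    unfolding w_def by (rule scalar_prod_minus_distrib[OF u u e])
  also have "unit_vec n 0 \<bullet> w = unit_vec n 0 \<bullet> u - unit_vec n 0 \<bullet> unit_vec n 0"
    unfolding w_def by (rule scalar_prod_minus_distrib[OF e u e])
  finally have ww: "w \<bullet> w = 2 - 2 * u $ 0"
    using n u uu by (simp add: scalar_prod_left_unit scalar_prod_right_unit)
  have "hh n w *\<^sub>v unit_vec n 0 = unit_vec n 0 - ((2 / (w \<bullet> w)) * (w \<bullet> unit_vec n 0)) \<cdot>\<^sub>v w"
    using hh_mult_vec[OF w] n by auto
  also have "\<dots> = u"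
  proof (cases "u $ 0 = 1")
    case True
    hence "w \<bullet> w = 0" using ww by simp
    hence "w = 0\<^sub>v n" using self_scalar_zero[OF w] by simp
    have ue: "u = unit_vec n 0"
    proof (rule eq_vecI)
      fix i assume "i < dim_vec (unit_vec n 0)"
      hence "w $ i = 0" "i < n" using \<open>w = 0\<^sub>v n\<close> by auto
      thus "u $ i = unit_vec n 0 $ i" unfolding w_def using u by auto
    qed (use u in auto)
    show ?thesis using \<open>w = 0\<^sub>v n\<close> ue by (auto intro!: eq_vecI)
  next
    case False
    hence "(2 / (w \<bullet> w)) * (w \<bullet> unit_vec n 0) = -1" using ww we by (simp add: field_simps)
    thus ?thesis unfolding w_def using u by (auto intro!: eq_vecI)
  qed
  finally show ?thesis unfolding w_def .
qed


definition diagm :: "nat \<Rightarrow> (nat \<Rightarrow> real) \<Rightarrow> real mat" where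
  "diagm n d = mat n n (\<lambda>(i,j). if i = j then d i else 0)"

lemma diagm_carrier[simp]: "diagm n d \<in> carrier_mat n n" unfolding diagm_def by auto
lemma diagm_dims[simp]: "dim_row (diagm n d) = n" "dim_col (diagm n d) = n" unfolding diagm_def by auto

lemma spectral:
  fixes A :: "real mat"
  assumes "A \<in> carrier_mat n n" "transpose_mat A = A"
  shows "\<exists>P d. P \<in> carrier_mat n n \<and> transpose_mat P * P = 1\<^sub>m n \<and> P * transpose_mat P = 1\<^sub>m n
     \<and> A = P * diagm n d * transpose_mat P"
  using assms
proof (induction n arbitrary: A)
  case 0
  show ?case
    by (rule exI[of _ "1\<^sub>m 0"], rule exI[of _ "\<lambda>_. 0"], insert 0(1), auto intro!: eq_matI)
next
  case (Suc k A)
  define n where "n = Suc k"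
  have A: "A \<in> carrier_mat n n" and symA: "transpose_mat A = A" using Suc(2,3) n_def by auto
  have n: "0 < n" unfolding n_def by simp
  obtain lam v where v: "v \<in> carrier_vec n" and v0: "v \<noteq> 0\<^sub>v n" and Av: "A *\<^sub>v v = lam \<cdot>\<^sub>v v"
    using sym_real_eigen[OF A symA n] by auto
  have vv0: "v \<bullet> v \<noteq> 0" using self_scalar_zero[OF v] v0 by auto
  have vvnn: "v \<bullet> v \<ge> 0" using v by (simp add: scalar_prod_def sum_nonneg)
  define u where "u = (1 / sqrt (v \<bullet> v)) \<cdot>\<^sub>v v"
  have u: "u \<in> carrier_vec n" unfolding u_def using v by simp
  have uu: "u \<bullet> u = 1" unfolding u_def using v vv0 vvnn
    by (simp add: smult_scalar_prod_distrib[OF _ v] scalar_prod_smult_distrib[OF v v] power2_eq_square[symmetric])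
  have Au: "A *\<^sub>v u = lam \<cdot>\<^sub>v u" unfolding u_def
    using mult_mat_vec[OF A v] Av v by (auto intro!: eq_vecI)
  define H where "H = hh n (u - unit_vec n 0)"
  have wc: "u - unit_vec n 0 \<in> carrier_vec n" using u by simp
  have H: "H \<in> carrier_mat n n" unfolding H_def by simp
  have HT: "transpose_mat H = H" unfolding H_def by (rule hh_transpose)
  have HH: "H * H = 1\<^sub>m n" unfolding H_def by (rule hh_hh[OF wc])
  have He: "H *\<^sub>v unit_vec n 0 = u" unfolding H_def by (rule hh_e0[OF u uu n])
  have Hu: "H *\<^sub>v u = unit_vec n 0"
    using hh_hh_vec[OF wc, of "unit_vec n 0"] He unfolding H_def by simp
  define A' where "A' = H * A * H"
  have A': "A' \<in> carrier_mat n n" unfolding A'_def using H A by auto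
  have symA': "transpose_mat A' = A'"
  proof -
    have "transpose_mat (H * A * H) = transpose_mat H * transpose_mat (H * A)"
      by (rule transpose_mult[OF mult_carrier_mat[OF H A] H])
    also have "\<dots> = H * (A * H)" using transpose_mult[OF H A] HT symA by simp
    also have "\<dots> = H * A * H" using H A by (simp add: assoc_mult_mat[of _ n n _ n _ n])
    finally show ?thesis unfolding A'_def .
  qed
  have col0: "A' *\<^sub>v unit_vec n 0 = lam \<cdot>\<^sub>v unit_vec n 0"
  proof -
    have "A' *\<^sub>v unit_vec n 0 = H *\<^sub>v (A *\<^sub>v (H *\<^sub>v unit_vec n 0))"
      unfolding A'_def using H A by (simp add: assoc_mult_mat_vec[of _ n n _ n])
    also have "\<dots> = lam \<cdot>\<^sub>v unit_vec n 0" unfolding He Au using mult_mat_vec[OF H u] Hu by simp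
    finally show ?thesis .
  qed
  have A'i0: "A' $$ (i,0) = (if i = 0 then lam else 0)" if "i < n" for i
    using mult_unit_entry[OF A' that n] col0 that n by (cases "i = 0") auto
  have A'0j: "A' $$ (0,j) = (if j = 0 then lam else 0)" if "j < n" for j
  proof -
    have "A' $$ (0,j) = transpose_mat A' $$ (j,0)" using A' that n by simp
    thus ?thesis using symA' A'i0[OF that] by simp
  qed
  define A3 where "A3 = mat k k (\<lambda>(i,j). A' $$ (Suc i, Suc j))"
  have A3: "A3 \<in> carrier_mat k k" unfolding A3_def by simp
  have symA3: "transpose_mat A3 = A3"
  proof (rule eq_matI)
    fix i j assume "i < dim_row A3" "j < dim_col A3"
    hence ij: "i < k" "j < k" using A3 by auto
    have "A' $$ (Suc j, Suc i) = transpose_mat A' $$ (Suc i, Suc j)" using A' ij n_def by simp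
    thus "transpose_mat A3 $$ (i,j) = A3 $$ (i,j)" using ij symA' unfolding A3_def by simp
  qed (auto simp: A3_def)
  from Suc(1)[OF A3 symA3] obtain P3 d3 where P3: "P3 \<in> carrier_mat k k"
    and P3o: "transpose_mat P3 * P3 = 1\<^sub>m k" "P3 * transpose_mat P3 = 1\<^sub>m k"
    and A3d: "A3 = P3 * diagm k d3 * transpose_mat P3" by auto
  define L where "L = mat 1 1 (\<lambda>_. lam)"
  have L: "L \<in> carrier_mat 1 1" unfolding L_def by simp
  have A'b: "A' = four_block_mat L (0\<^sub>m 1 k) (0\<^sub>m k 1) A3"
  proof (rule eq_matI)
    fix i j assume ij: "i < dim_row (four_block_mat L (0\<^sub>m 1 k) (0\<^sub>m k 1) A3)"
      "j < dim_col (four_block_mat L (0\<^sub>m 1 k) (0\<^sub>m k 1) A3)"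
    hence i: "i < n" and j: "j < n" using L A3 n_def by auto
    show "A' $$ (i,j) = four_block_mat L (0\<^sub>m 1 k) (0\<^sub>m k 1) A3 $$ (i,j)"
    proof (cases "i = 0 \<or> j = 0")
      case True thus ?thesis using i j A'i0 A'0j L A3 n_def by (auto simp: L_def)
    next
      case False
      then obtain i' j' where "i = Suc i'" "j = Suc j'" by (metis not0_implies_Suc)
      thus ?thesis using i j L A3 n_def by (simp add: A3_def)
    qed
  qed (insert A' L A3 n_def, auto)
  define P1 where "P1 = four_block_mat (1\<^sub>m 1) (0\<^sub>m 1 k) (0\<^sub>m k 1) P3"
  define d where "d = (\<lambda>i. if i = 0 then lam else d3 (i - 1))"
  have P1: "P1 \<in> carrier_mat n n" unfolding P1_def n_def using P3 by auto
  have P1T: "transpose_mat P1 = four_block_mat (1\<^sub>m 1) (0\<^sub>m 1 k) (0\<^sub>m k 1) (transpose_mat P3)"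
    unfolding P1_def by (rule eq_matI, insert P3, auto)
  have c1: "1\<^sub>m 1 \<in> carrier_mat 1 1" "0\<^sub>m 1 k \<in> carrier_mat 1 k" "0\<^sub>m k 1 \<in> carrier_mat k 1"
    "transpose_mat P3 \<in> carrier_mat k k" using P3 by auto
  have P1o1: "transpose_mat P1 * P1 = 1\<^sub>m n" unfolding P1T unfolding P1_def n_def
    by (subst mult_four_block_mat[OF c1 c1(1-3) P3], insert P3 P3o, auto)
  have P1o2: "P1 * transpose_mat P1 = 1\<^sub>m n" unfolding P1T unfolding P1_def n_def
    by (subst mult_four_block_mat[OF c1(1-3) P3 c1], insert P3 P3o, auto)
  have Dd: "diagm n d = four_block_mat L (0\<^sub>m 1 k) (0\<^sub>m k 1) (diagm k d3)"
    by (rule eq_matI, auto simp: diagm_def d_def L_def n_def)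
  have PD: "P1 * diagm n d = four_block_mat L (0\<^sub>m 1 k) (0\<^sub>m k 1) (P3 * diagm k d3)"
    unfolding Dd P1_def
    by (subst mult_four_block_mat[OF c1(1-3) P3 L c1(2-3) diagm_carrier], insert P3 L, auto)
  have PDk: "P3 * diagm k d3 \<in> carrier_mat k k" using P3 by auto
  have "P1 * diagm n d * transpose_mat P1 = A'"
    unfolding PD P1T A'b A3d
    by (subst mult_four_block_mat[OF L c1(2-3) PDk c1], insert P3 L, auto)
  define P where "P = H * P1"
  have P: "P \<in> carrier_mat n n" unfolding P_def using H P1 by auto
  have PT: "transpose_mat P = transpose_mat P1 * H" unfolding P_def
    using transpose_mult[OF H P1] HT by simp
  have P1T': "transpose_mat P1 \<in> carrier_mat n n" using P1 by simp
  have "transpose_mat P * P = transpose_mat P1 * ((H * H) * P1)" unfolding PT unfolding P_def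
    using H P1 P1T' by (simp add: assoc_mult_mat[of _ n n _ n _ n])
  hence "transpose_mat P * P = 1\<^sub>m n" using HH P1o1 P1 by simp
  moreover have "P * transpose_mat P = H * ((P1 * transpose_mat P1) * H)" unfolding PT unfolding P_def
    using H P1 P1T' by (simp add: assoc_mult_mat[of _ n n _ n _ n])
  hence "P * transpose_mat P = 1\<^sub>m n" using HH P1o2 H by simp
  moreover have "A = P * diagm n d * transpose_mat P"
  proof -
    have "H * A' * H = (H * H) * A * (H * H)" unfolding A'_def
      using H A by (simp add: assoc_mult_mat[of _ n n _ n _ n])
    hence "A = H * A' * H" using HH A by simp
    also have "\<dots> = H * (P1 * diagm n d * transpose_mat P1) * H"
      using \<open>P1 * diagm n d * transpose_mat P1 = A'\<close> by simp
    also have "\<dots> = P * diagm n d * transpose_mat P"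
    proof -
      have c: "diagm n d * transpose_mat P1 \<in> carrier_mat n n" "P1 * (diagm n d * transpose_mat P1) \<in> carrier_mat n n"
        using P1 by auto
      show ?thesis unfolding PT unfolding P_def using H P1 P1T' c by (simp add: assoc_mult_mat[of _ n n _ n _ n])
    qed
    finally show ?thesis .
  qed
  ultimately show ?case using P unfolding n_def by blast
qed

lemma sq_mult_carrier: "A \<in> carrier_mat n n \<Longrightarrow> B \<in> carrier_mat n n \<Longrightarrow> A * B \<in> carrier_mat n n"
  by auto

lemma conj_transpose:
  fixes P D :: "real mat"
  assumes P: "P \<in> carrier_mat n n" and D: "D \<in> carrier_mat n n"
  shows "transpose_mat (P * D * transpose_mat P) = P * transpose_mat D * transpose_mat P"
proof -
  have PT: "transpose_mat P \<in> carrier_mat n n" using P by simp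
  have "transpose_mat (P * D * transpose_mat P) = transpose_mat (transpose_mat P) * transpose_mat (P * D)"
    by (rule transpose_mult[OF mult_carrier_mat[OF P D] PT])
  also have "\<dots> = P * (transpose_mat D * transpose_mat P)" using transpose_mult[OF P D] by simp
  also have "\<dots> = P * transpose_mat D * transpose_mat P" using P D PT
    by (simp add: assoc_mult_mat[of _ n n _ n _ n])
  finally show ?thesis .
qed

lemma diagm_mult: "diagm n f * diagm n g = diagm n (\<lambda>i. f i * g i)"
proof (rule eq_matI)
  fix i j assume "i < dim_row (diagm n (\<lambda>i. f i * g i))" "j < dim_col (diagm n (\<lambda>i. f i * g i))"
  hence ij: "i < n" "j < n" by auto
  have "(diagm n f * diagm n g) $$ (i,j) = (\<Sum>k\<in>{0..<n}. (if i = k then f i else 0) * (if k = j then g k else 0))"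
    using ij by (simp add: diagm_def scalar_prod_def)
  also have "\<dots> = (\<Sum>k\<in>{0..<n}. if k = i then (if i = j then f i * g i else 0) else 0)"
    by (rule sum.cong, auto)
  also have "\<dots> = diagm n (\<lambda>i. f i * g i) $$ (i,j)" using ij by (simp add: diagm_def)
  finally show "(diagm n f * diagm n g) $$ (i,j) = diagm n (\<lambda>i. f i * g i) $$ (i,j)" .
qed auto

lemma diagm_transpose[simp]: "transpose_mat (diagm n f) = diagm n f"
  by (rule eq_matI, auto simp: diagm_def)

lemma diagm_quad:
  assumes y: "y \<in> carrier_vec n"
  shows "y \<bullet> (diagm n f *\<^sub>v y) = (\<Sum>i<n. f i * (y $ i)^2)"
proof -
  have "(diagm n f *\<^sub>v y) $ i = f i * y $ i" if "i < n" for i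
  proof -
    have "(diagm n f *\<^sub>v y) $ i = (\<Sum>k\<in>{0..<n}. (if i = k then f i else 0) * y $ k)"
      using that y by (simp add: diagm_def scalar_prod_def)
    also have "\<dots> = (\<Sum>k\<in>{0..<n}. if k = i then f i * y $ i else 0)" by (rule sum.cong, auto)
    finally show ?thesis using that by simp
  qed
  thus ?thesis using y by (simp add: scalar_prod_def lessThan_atLeast0 power2_eq_square mult.commute mult.left_commute)
qed

lemma conj_quad:
  fixes P D :: "real mat"
  assumes P: "P \<in> carrier_mat n n" and D: "D \<in> carrier_mat n n" and v: "v \<in> carrier_vec n"
  shows "v \<bullet> (P * D * transpose_mat P *\<^sub>v v) = (transpose_mat P *\<^sub>v v) \<bullet> (D *\<^sub>v (transpose_mat P *\<^sub>v v))"
proof -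
  have PT: "transpose_mat P \<in> carrier_mat n n" using P by simp
  have y: "transpose_mat P *\<^sub>v v \<in> carrier_vec n" using PT v by simp
  have "P * D * transpose_mat P *\<^sub>v v = P *\<^sub>v (D *\<^sub>v (transpose_mat P *\<^sub>v v))"
    using P D PT v by (simp add: assoc_mult_mat_vec[of _ n n _ n])
  moreover have "v \<bullet> (P *\<^sub>v (D *\<^sub>v (transpose_mat P *\<^sub>v v))) = (transpose_mat P *\<^sub>v v) \<bullet> (D *\<^sub>v (transpose_mat P *\<^sub>v v))"
    using transpose_vec_mult_scalar[OF P _ v, of "D *\<^sub>v (transpose_mat P *\<^sub>v v)"] D y by simp
  ultimately show ?thesis by simp
qed

lemma sqrt_exists:
  assumes A: "nnd_mat n A"
  shows "\<exists>S. nnd_mat n S \<and> S * S = A"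
proof -
  have Ac: "A \<in> carrier_mat n n" and sym: "transpose_mat A = A" using A unfolding nnd_mat_def by auto
  obtain P d where P: "P \<in> carrier_mat n n" and o1: "transpose_mat P * P = 1\<^sub>m n"
    and o2: "P * transpose_mat P = 1\<^sub>m n" and Ad: "A = P * diagm n d * transpose_mat P"
    using spectral[OF Ac sym] by auto
  have PT: "transpose_mat P \<in> carrier_mat n n" using P by simp
  have dnn: "d i \<ge> 0" if i: "i < n" for i
  proof -
    define v where "v = P *\<^sub>v unit_vec n i"
    have v: "v \<in> carrier_vec n" unfolding v_def using P by simp
    have "transpose_mat P *\<^sub>v v = unit_vec n i" unfolding v_def
      using o1 P PT by (simp add: assoc_mult_mat_vec[of _ n n _ n, symmetric])
    hence "v \<bullet> (A *\<^sub>v v) = unit_vec n i \<bullet> (diagm n d *\<^sub>v unit_vec n i)"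
      unfolding Ad using conj_quad[OF P diagm_carrier v] by simp
    also have "\<dots> = (\<Sum>k<n. d k * (unit_vec n i $ k)^2)" by (rule diagm_quad, simp)
    also have "\<dots> = (\<Sum>k<n. if k = i then d i else 0)" by (rule sum.cong, auto simp: unit_vec_def)
    also have "\<dots> = d i" using i by simp
    finally show ?thesis using A v unfolding nnd_mat_def by auto
  qed
  define S where "S = P * diagm n (\<lambda>i. sqrt (d i)) * transpose_mat P"
  have S: "S \<in> carrier_mat n n" unfolding S_def using P by auto
  have ST: "transpose_mat S = S" unfolding S_def using conj_transpose[OF P diagm_carrier] by simp
  have "nnd_mat n S" unfolding nnd_mat_def
  proof (intro conjI ballI S ST)
    fix v :: "real vec" assume v: "v \<in> carrier_vec n"
    have y: "transpose_mat P *\<^sub>v v \<in> carrier_vec n" using PT v by simp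
    show "v \<bullet> (S *\<^sub>v v) \<ge> 0" unfolding S_def conj_quad[OF P diagm_carrier v] diagm_quad[OF y]
      using dnn by (intro sum_nonneg) auto
  qed
  moreover have "S * S = A"
  proof -
    have c: "diagm n (\<lambda>i. sqrt (d i)) * transpose_mat P \<in> carrier_mat n n" using P by (intro mult_carrier_mat) auto
    have "S * S = P * ((diagm n (\<lambda>i. sqrt (d i)) * (transpose_mat P * P)) * (diagm n (\<lambda>i. sqrt (d i)) * transpose_mat P))"
      unfolding S_def using P PT c by (simp add: assoc_mult_mat[of _ n n _ n _ n])
    also have "\<dots> = P * ((diagm n (\<lambda>i. sqrt (d i)) * diagm n (\<lambda>i. sqrt (d i))) * transpose_mat P)"
      unfolding o1 using PT by (simp add: assoc_mult_mat[of _ n n _ n _ n])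
    also have "diagm n (\<lambda>i. sqrt (d i)) * diagm n (\<lambda>i. sqrt (d i)) = diagm n d"
      unfolding diagm_mult using dnn by (auto simp: diagm_def intro!: eq_matI)
    finally show ?thesis unfolding Ad using P PT by (simp add: assoc_mult_mat[of _ n n _ n _ n])
  qed
  ultimately show ?thesis by blast
qed

lemma ginv_exists:
  fixes A :: "real mat"
  assumes Ac: "A \<in> carrier_mat n n" and sym: "transpose_mat A = A"
  shows "\<exists>G. G \<in> carrier_mat n n \<and> A * G * A = A"
proof -
  obtain P d where P: "P \<in> carrier_mat n n" and o1: "transpose_mat P * P = 1\<^sub>m n"
    and o2: "P * transpose_mat P = 1\<^sub>m n" and Ad: "A = P * diagm n d * transpose_mat P"
    using spectral[OF Ac sym] by auto
  have PT: "transpose_mat P \<in> carrier_mat n n" using P by simp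
  define e where "e = (\<lambda>i. if d i = 0 then 0 else 1 / d i)"
  define G where "G = P * diagm n e * transpose_mat P"
  have G: "G \<in> carrier_mat n n" unfolding G_def using P by auto
  have de: "diagm n d * diagm n e * diagm n d = diagm n d"
    unfolding diagm_mult by (rule arg_cong[where f = "diagm n"], auto simp: e_def)
  have "A * G * A = P * (diagm n d * (transpose_mat P * P) * diagm n e * (transpose_mat P * P) * diagm n d) * transpose_mat P"
    unfolding Ad G_def using P PT by (simp add: assoc_mult_mat[of _ n n _ n _ n] sq_mult_carrier)
  also have "\<dots> = A" unfolding o1 Ad using de P PT by (simp add: assoc_mult_mat[of _ n n _ n _ n] sq_mult_carrier)
  finally show ?thesis using G by blast
qed

lemma cm: "A \<in> carrier_mat (dim_row A) (dim_col A)" by auto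

lemma massoc: assumes "dim_col A = dim_row B" "dim_col B = dim_row C"
  shows "A * B * C = A * (B * (C :: 'a :: semiring_0 mat))"
proof -
  have "A \<in> carrier_mat (dim_row A) (dim_row B)" "B \<in> carrier_mat (dim_row B) (dim_row C)"
    "C \<in> carrier_mat (dim_row C) (dim_col C)" using assms by auto
  thus ?thesis by (rule assoc_mult_mat)
qed
lemma mdistr_minus: assumes "dim_col A = dim_row B" "dim_row B = dim_row C" "dim_col B = dim_col C"
  shows "A * (B - C) = A * B - A * (C :: 'a :: ring mat)"
proof -
  have "A \<in> carrier_mat (dim_row A) (dim_row B)" "B \<in> carrier_mat (dim_row B) (dim_col B)"
    "C \<in> carrier_mat (dim_row B) (dim_col B)" using assms by auto
  thus ?thesis by (rule mult_minus_distrib_mat)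
qed
lemma mdistl_minus: assumes "dim_row A = dim_row B" "dim_col A = dim_col B" "dim_col A = dim_row C"
  shows "(A - B) * C = A * C - B * (C :: 'a :: ring mat)"
proof -
  have "A \<in> carrier_mat (dim_row A) (dim_col A)" "B \<in> carrier_mat (dim_row A) (dim_col A)"
    "C \<in> carrier_mat (dim_col A) (dim_col C)" using assms by auto
  thus ?thesis by (rule minus_mult_distrib_mat)
qed
lemma mdistr_plus: assumes "dim_col A = dim_row B" "dim_row B = dim_row C" "dim_col B = dim_col C"
  shows "A * (B + C) = A * B + A * (C :: 'a :: semiring_0 mat)"
proof -
  have "A \<in> carrier_mat (dim_row A) (dim_row B)" "B \<in> carrier_mat (dim_row B) (dim_col B)"
    "C \<in> carrier_mat (dim_row B) (dim_col B)" using assms by auto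
  thus ?thesis by (rule mult_add_distrib_mat)
qed
lemma mdistl_plus: assumes "dim_row A = dim_row B" "dim_col A = dim_col B" "dim_col A = dim_row C"
  shows "(A + B) * C = A * C + B * (C :: 'a :: semiring_0 mat)"
proof -
  have "A \<in> carrier_mat (dim_row A) (dim_col A)" "B \<in> carrier_mat (dim_row A) (dim_col A)"
    "C \<in> carrier_mat (dim_col A) (dim_col C)" using assms by auto
  thus ?thesis by (rule add_mult_distrib_mat)
qed
lemma mtrans_mult: assumes "dim_col A = dim_row B"
  shows "transpose_mat (A * B) = transpose_mat B * transpose_mat (A :: 'a :: comm_semiring_0 mat)"
proof -
  have "A \<in> carrier_mat (dim_row A) (dim_row B)" "B \<in> carrier_mat (dim_row B) (dim_col B)"
    using assms by auto
  thus ?thesis by (rule transpose_mult)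
qed
lemma mtrans_minus: assumes "dim_row A = dim_row B" "dim_col A = dim_col B"
  shows "transpose_mat (A - B) = transpose_mat A - transpose_mat (B :: 'a :: ab_group_add mat)"
proof -
  have "A \<in> carrier_mat (dim_row A) (dim_col A)" "B \<in> carrier_mat (dim_row A) (dim_col A)"
    using assms by auto
  thus ?thesis by (rule transpose_minus)
qed
lemma mtrans_plus: assumes "dim_row A = dim_row B" "dim_col A = dim_col B"
  shows "transpose_mat (A + B) = transpose_mat A + transpose_mat (B :: 'a :: ab_group_add mat)"
proof -
  have "A \<in> carrier_mat (dim_row A) (dim_col A)" "B \<in> carrier_mat (dim_row A) (dim_col A)"
    using assms by auto
  thus ?thesis by (rule transpose_add)
qed
lemma mminus_self: "A - A = 0\<^sub>m (dim_row A) (dim_col (A :: 'a :: ab_group_add mat))"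
  by (rule minus_r_inv_mat[OF cm])
lemma mminus_zero: "dim_row A = a \<Longrightarrow> dim_col A = b \<Longrightarrow> A - 0\<^sub>m a b = (A :: 'a :: ab_group_add mat)"
  by (rule eq_matI, auto)
lemma mplus_zero: "dim_row A = a \<Longrightarrow> dim_col A = b \<Longrightarrow> A + 0\<^sub>m a b = (A :: 'a :: monoid_add mat)"
  by (rule eq_matI, auto)
lemma mzero_plus: "dim_row A = a \<Longrightarrow> dim_col A = b \<Longrightarrow> 0\<^sub>m a b + A = (A :: 'a :: monoid_add mat)"
  by (rule eq_matI, auto)

lemma meq_minus: assumes "dim_row A = dim_row B" "dim_col A = dim_col B" "A - B = 0\<^sub>m a b"
  shows "A = (B :: 'a :: ab_group_add mat)"
proof (rule eq_matI)
  fix i j assume ij: "i < dim_row B" "j < dim_col B"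
  have ab: "dim_row B = a" "dim_col B = b"
    using arg_cong[OF assms(3), of dim_row] arg_cong[OF assms(3), of dim_col] by auto
  have "(A - B) $$ (i,j) = 0" using assms(3) ij ab by simp
  thus "A $$ (i,j) = B $$ (i,j)" using ij by simp
qed (use assms in auto)

lemmas msimps = massoc mdistr_minus mdistl_minus mdistr_plus mdistl_plus mtrans_mult mtrans_minus mtrans_plus

lemma gram_zero:
  fixes M :: "real mat"
  assumes M: "M \<in> carrier_mat a b" and z: "transpose_mat M * M = 0\<^sub>m b b"
  shows "M = 0\<^sub>m a b"
proof (rule eq_matI)
  fix i j assume ij: "i < dim_row (0\<^sub>m a b)" "j < dim_col (0\<^sub>m a b)"
  hence i: "i < a" and j: "j < b" by auto
  have "(transpose_mat M * M) $$ (j,j) = 0" using z j by simp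
  hence "(\<Sum>k\<in>{0..<a}. M $$ (k,j) * M $$ (k,j)) = 0"
    using M j by (simp add: scalar_prod_def)
  hence "\<forall>k\<in>{0..<a}. M $$ (k,j) * M $$ (k,j) = 0" by (subst (asm) sum_nonneg_eq_0_iff) auto
  thus "M $$ (i,j) = 0\<^sub>m a b $$ (i,j)" using i j by auto
qed (insert M, auto)

lemma ginv_prop1:
  fixes B G :: "real mat"
  assumes B: "B \<in> carrier_mat m q" and G: "G \<in> carrier_mat q q"
    and g: "transpose_mat B * B * G * (transpose_mat B * B) = transpose_mat B * B"
  shows "B * (G * (transpose_mat B * B)) = B"
proof -
  have d: "dim_row B = m" "dim_col B = q" "dim_row G = q" "dim_col G = q" using B G by auto
  have g': "transpose_mat B * (B * (G * (transpose_mat B * B))) = transpose_mat B * B"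
    using g d by (simp add: msimps)
  define X where "X = B * (G * (transpose_mat B * B)) - B"
  have X: "X \<in> carrier_mat m q" unfolding X_def using B G by auto
  have "transpose_mat X * X = 0\<^sub>m q q"
    unfolding X_def using d g' by (simp add: msimps mminus_self)
  hence "X = 0\<^sub>m m q" by (rule gram_zero[OF X])
  hence "B * (G * (transpose_mat B * B)) - B = 0\<^sub>m m q" unfolding X_def .
  thus "B * (G * (transpose_mat B * B)) = B"
    by (rule meq_minus[rotated 2]) (use d in auto)
qed

lemma ginv_prop2:
  fixes B G :: "real mat"
  assumes B: "B \<in> carrier_mat m q" and G: "G \<in> carrier_mat q q"
    and g: "transpose_mat B * B * G * (transpose_mat B * B) = transpose_mat B * B"
  shows "transpose_mat B * (B * (G * transpose_mat B)) = transpose_mat B"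
proof -
  have d: "dim_row B = m" "dim_col B = q" "dim_row G = q" "dim_col G = q" using B G by auto
  have "transpose_mat (transpose_mat B * B * G * (transpose_mat B * B)) = transpose_mat (transpose_mat B * B)"
    using g by simp
  hence "transpose_mat B * B * transpose_mat G * (transpose_mat B * B) = transpose_mat B * B"
    using d by (simp add: msimps)
  from ginv_prop1[OF B _ this] G
  have "B * (transpose_mat G * (transpose_mat B * B)) = B" by simp
  hence "transpose_mat (B * (transpose_mat G * (transpose_mat B * B))) = transpose_mat B" by simp
  thus ?thesis using d by (simp add: msimps)
qed

lemma core:
  fixes S Sg Y C H G1 G2 :: "real mat"
  assumes S: "S \<in> carrier_mat m m" and ST: "transpose_mat S = S"
    and Sg: "Sg \<in> carrier_mat m m" and SgS: "Sg * (S * S) = 1\<^sub>m m"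
    and Y: "Y \<in> carrier_mat m q" and C: "C \<in> carrier_mat q r" and H: "H \<in> carrier_mat m r"
    and Sgd: "Sg = 1\<^sub>m m + H * transpose_mat (Y * C) + (Y * C) * transpose_mat H"
    and G1: "G1 \<in> carrier_mat q q"
    and g1: "transpose_mat (S * Y) * (S * Y) * G1 * (transpose_mat (S * Y) * (S * Y)) = transpose_mat (S * Y) * (S * Y)"
    and G2: "G2 \<in> carrier_mat q q"
    and g2: "transpose_mat Y * Y * G2 * (transpose_mat Y * Y) = transpose_mat Y * Y"
  shows "S * (1\<^sub>m m - (S * Y) * G1 * transpose_mat (S * Y)) * S = 1\<^sub>m m - Y * G2 * transpose_mat Y"
proof -
  define B where "B = S * Y"
  have B: "B \<in> carrier_mat m q" unfolding B_def using S Y by auto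
  have d: "dim_row S = m" "dim_col S = m" "dim_row Sg = m" "dim_col Sg = m"
    "dim_row Y = m" "dim_col Y = q" "dim_row C = q" "dim_col C = r" "dim_row H = m" "dim_col H = r"
    "dim_row G1 = q" "dim_col G1 = q" "dim_row G2 = q" "dim_col G2 = q" "dim_row B = m" "dim_col B = q"
    using S Sg Y C H G1 G2 B by auto
  have F1: "B * (G1 * (transpose_mat B * B)) = B" using ginv_prop1[OF B G1 g1[folded B_def]] .
  have F2: "transpose_mat B * (B * (G1 * transpose_mat B)) = transpose_mat B"
    using ginv_prop2[OF B G1 g1[folded B_def]] .
  have F2x: "transpose_mat B * (B * (G1 * (transpose_mat B * X))) = transpose_mat B * X"
    if "dim_row X = m" for X
  proof -
    have "transpose_mat B * (B * (G1 * transpose_mat B)) * X = transpose_mat B * X" using F2 by simp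
    thus ?thesis using d that by (simp add: msimps)
  qed
  have F3: "Y * (G2 * (transpose_mat Y * Y)) = Y" using ginv_prop1[OF Y G2 g2] .
  have BT: "transpose_mat B = transpose_mat Y * S" unfolding B_def using d ST by (simp add: msimps)
  have YSx: "transpose_mat Y * (S * X) = transpose_mat B * X" if "dim_row X = m" for X
    unfolding BT using d that by (simp add: msimps)
  have SYx: "S * (Y * X) = B * X" if "dim_row X = q" for X
    unfolding B_def using d that by (simp add: msimps)
  have SgSx: "Sg * (S * (S * X)) = X" if "dim_row X = m" for X
  proof -
    have "Sg * (S * S) * X = X" using SgS that by simp
    thus ?thesis using d that by (simp add: msimps)
  qed
  define K where "K = S * S - S * (B * (G1 * (transpose_mat B * S)))"
  have K: "K \<in> carrier_mat m m" unfolding K_def using S B G1 by auto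
  have Kd: "dim_row K = m" "dim_col K = m" using K by auto
  have lhs: "S * (1\<^sub>m m - (S * Y) * G1 * transpose_mat (S * Y)) * S = K"
    unfolding K_def B_def[symmetric] using d by (simp add: msimps)
  have KY: "K * Y = 0\<^sub>m m q"
    unfolding K_def using d F1 by (simp add: msimps SYx B_def[symmetric] mminus_self)
  have KYx: "K * (Y * X) = 0\<^sub>m m (dim_col X)" if "dim_row X = q" for X
  proof -
    have "K * Y * X = 0\<^sub>m m (dim_col X)" using KY that by simp
    thus ?thesis using d Kd that by (simp add: msimps)
  qed
  have YK: "transpose_mat Y * K = 0\<^sub>m q m"
    unfolding K_def using d F2x by (simp add: msimps YSx mminus_self)
  have YKx: "transpose_mat Y * (K * X) = 0\<^sub>m q (dim_col X)" if "dim_row X = m" for X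
  proof -
    have "transpose_mat Y * K * X = 0\<^sub>m q (dim_col X)" using YK that by simp
    thus ?thesis using d Kd that by (simp add: msimps)
  qed
  define Q where "Q = 1\<^sub>m m - Y * (G2 * transpose_mat Y)"
  have Qd: "dim_row Q = m" "dim_col Q = m" unfolding Q_def using d by auto
  have rhs: "1\<^sub>m m - Y * G2 * transpose_mat Y = Q" unfolding Q_def using d by (simp add: msimps)
  have QY: "Q * Y = 0\<^sub>m m q" unfolding Q_def using d F3 by (simp add: msimps mminus_self)
  have QYx: "Q * (Y * X) = 0\<^sub>m m (dim_col X)" if "dim_row X = q" for X
  proof -
    have "Q * Y * X = 0\<^sub>m m (dim_col X)" using QY that by simp
    thus ?thesis using d Qd that by (simp add: msimps)
  qed
  have QK: "Q * K = K" unfolding Q_def using d Kd YK by (simp add: msimps mminus_zero)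
  have SgK: "Sg * K = 1\<^sub>m m - Y * (G1 * (transpose_mat B * S))"
    unfolding K_def using d SgSx SgS by (simp add: msimps B_def[symmetric] SYx[symmetric])
  have "Q * (Sg * K) = Q"
    unfolding SgK using d Qd QYx by (simp add: msimps mminus_zero)
  moreover have "Q * (Sg * K) = K"
  proof -
    have "Sg * K = K + H * (transpose_mat C * (transpose_mat Y * K)) + Y * (C * (transpose_mat H * K))"
      unfolding Sgd using d Kd by (simp add: msimps)
    also have "\<dots> = K + Y * (C * (transpose_mat H * K))" using YK d Kd by (simp add: mplus_zero)
    finally have "Q * (Sg * K) = Q * K + Q * (Y * (C * (transpose_mat H * K)))" using d Kd Qd by (simp add: msimps)
    thus ?thesis using QK QYx d Kd by (simp add: mplus_zero)
  qed
  ultimately have "K = Q" by simp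
  thus ?thesis using lhs rhs by simp
qed

lemma dbm_dims:
  "dim_row (diag_block_mat (map f xs)) = sum_list (map (\<lambda>x. dim_row (f x)) xs)"
  "dim_col (diag_block_mat (map f xs)) = sum_list (map (\<lambda>x. dim_col (f x)) xs)"
  by (simp_all add: dim_diag_block_mat o_def)

lemma dbm_mult:
  assumes "\<forall>x\<in>set xs. dim_col (f x) = dim_row (g x)"
  shows "diag_block_mat (map f xs) * diag_block_mat (map g xs) = diag_block_mat (map (\<lambda>x. f x * (g x :: real mat)) xs)"
  using assms
proof (induction xs)
  case Nil thus ?case by (auto intro!: eq_matI)
next
  case (Cons x xs)
  define D1 where "D1 = diag_block_mat (map f xs)"
  define D2 where "D2 = diag_block_mat (map g xs)"
  have IH: "D1 * D2 = diag_block_mat (map (\<lambda>x. f x * g x) xs)" using Cons unfolding D1_def D2_def by auto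
  have eq: "dim_col D1 = dim_row D2" unfolding D1_def D2_def dbm_dims
    using Cons(2) by (auto intro!: arg_cong[where f = sum_list])
  have gx: "dim_col (f x) = dim_row (g x)" using Cons(2) by auto
  have "diag_block_mat (map f (x # xs)) * diag_block_mat (map g (x # xs)) =
    four_block_mat (f x) (0\<^sub>m (dim_row (f x)) (dim_col D1)) (0\<^sub>m (dim_row D1) (dim_col (f x))) D1 *
    four_block_mat (g x) (0\<^sub>m (dim_row (g x)) (dim_col D2)) (0\<^sub>m (dim_row D2) (dim_col (g x))) D2"
    unfolding D1_def D2_def by (simp add: Let_def)
  also have "\<dots> = four_block_mat (f x * g x + 0\<^sub>m (dim_row (f x)) (dim_col D1) * 0\<^sub>m (dim_row D2) (dim_col (g x)))
     (f x * 0\<^sub>m (dim_row (g x)) (dim_col D2) + 0\<^sub>m (dim_row (f x)) (dim_col D1) * D2)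
     (0\<^sub>m (dim_row D1) (dim_col (f x)) * g x + D1 * 0\<^sub>m (dim_row D2) (dim_col (g x)))
     (0\<^sub>m (dim_row D1) (dim_col (f x)) * 0\<^sub>m (dim_row (g x)) (dim_col D2) + D1 * D2)"
    by (rule mult_four_block_mat, insert eq gx, auto)
  also have "\<dots> = four_block_mat (f x * g x) (0\<^sub>m (dim_row (f x)) (dim_col D2)) (0\<^sub>m (dim_row D1) (dim_col (g x))) (D1 * D2)"
    using eq gx by (intro cong_four_block_mat) (auto intro!: eq_matI)
  also have "\<dots> = diag_block_mat (map (\<lambda>x. f x * g x) (x # xs))"
    by (simp add: Let_def IH[symmetric])
  finally show ?case .
qed

lemma dbm_transpose:
  "transpose_mat (diag_block_mat (map f xs)) = diag_block_mat (map (\<lambda>x. transpose_mat (f x :: real mat)) xs)"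
proof (induction xs)
  case Nil thus ?case by (auto intro!: eq_matI)
next
  case (Cons x xs)
  define D1 where "D1 = diag_block_mat (map f xs)"
  have "transpose_mat (diag_block_mat (map f (x # xs))) = transpose_mat
    (four_block_mat (f x) (0\<^sub>m (dim_row (f x)) (dim_col D1)) (0\<^sub>m (dim_row D1) (dim_col (f x))) D1)"
    unfolding D1_def by (simp add: Let_def)
  also have "\<dots> = four_block_mat (transpose_mat (f x)) (0\<^sub>m (dim_col (f x)) (dim_row D1))
     (0\<^sub>m (dim_col D1) (dim_row (f x))) (transpose_mat D1)"
    by (subst transpose_four_block_mat, auto)
  also have "\<dots> = diag_block_mat (map (\<lambda>x. transpose_mat (f x)) (x # xs))"
    unfolding D1_def by (simp add: Let_def Cons[symmetric])
  finally show ?case .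
qed

lemma dbm_add:
  assumes "\<forall>x\<in>set xs. dim_row (f x) = dim_row (g x) \<and> dim_col (f x) = dim_col (g x)"
  shows "diag_block_mat (map f xs) + diag_block_mat (map g xs) = diag_block_mat (map (\<lambda>x. f x + (g x :: real mat)) xs)"
  using assms
proof (induction xs)
  case Nil thus ?case by (auto intro!: eq_matI)
next
  case (Cons x xs)
  define D1 where "D1 = diag_block_mat (map f xs)"
  define D2 where "D2 = diag_block_mat (map g xs)"
  have IH: "D1 + D2 = diag_block_mat (map (\<lambda>x. f x + g x) xs)" using Cons unfolding D1_def D2_def by auto
  have eq: "dim_col D1 = dim_col D2" "dim_row D1 = dim_row D2" unfolding D1_def D2_def dbm_dims
    using Cons(2) by (auto intro!: arg_cong[where f = sum_list])
  have gx: "dim_col (f x) = dim_col (g x)" "dim_row (f x) = dim_row (g x)" using Cons(2) by auto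
  have "diag_block_mat (map f (x # xs)) + diag_block_mat (map g (x # xs)) =
    four_block_mat (f x) (0\<^sub>m (dim_row (f x)) (dim_col D1)) (0\<^sub>m (dim_row D1) (dim_col (f x))) D1 +
    four_block_mat (g x) (0\<^sub>m (dim_row (g x)) (dim_col D2)) (0\<^sub>m (dim_row D2) (dim_col (g x))) D2"
    unfolding D1_def D2_def by (simp add: Let_def)
  also have "\<dots> = four_block_mat (f x + g x) (0\<^sub>m (dim_row (f x)) (dim_col D1) + 0\<^sub>m (dim_row (g x)) (dim_col D2))
     (0\<^sub>m (dim_row D1) (dim_col (f x)) + 0\<^sub>m (dim_row D2) (dim_col (g x))) (D1 + D2)"
    by (rule add_four_block_mat, insert eq gx, auto)
  also have "\<dots> = diag_block_mat (map (\<lambda>x. f x + g x) (x # xs))"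
    using eq gx by (simp add: Let_def IH[symmetric])
  finally show ?case .
qed

lemma dbm_one: "diag_block_mat (map (\<lambda>x. 1\<^sub>m (k x)) xs) = (1\<^sub>m (sum_list (map k xs)) :: real mat)"
  using diag_block_one_mat[of "map (\<lambda>x. 1\<^sub>m (k x)) xs"] by (simp add: o_def)

definition hv :: "(nat \<Rightarrow> real) \<Rightarrow> nat \<Rightarrow> real mat" where
  "hv \<eta> k = mat k 1 (\<lambda>(i,_). \<eta> i)"
definition ov :: "nat \<Rightarrow> real mat" where
  "ov k = mat k 1 (\<lambda>_. 1)"
definition Sig :: "(nat \<Rightarrow> real) \<Rightarrow> nat \<Rightarrow> real mat" where
  "Sig \<eta> p = mat p p (\<lambda>(i,j). (if i = j then 1 else 0) + \<eta> i + \<eta> j)"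

lemma hv_dims[simp]: "dim_row (hv \<eta> k) = k" "dim_col (hv \<eta> k) = 1" unfolding hv_def by auto
lemma ov_dims[simp]: "dim_row (ov k) = k" "dim_col (ov k) = 1" unfolding ov_def by auto
lemma Ik_dims[simp]: "dim_row (Ik k i j) = i" "dim_col (Ik k i j) = j" unfolding Ik_def by auto

lemma ulsub_Sig:
  assumes "k \<le> p"
  shows "ulsub k (Sig \<eta> p) = 1\<^sub>m k + hv \<eta> k * transpose_mat (ov k) + ov k * transpose_mat (hv \<eta> k)"
  by (rule eq_matI, insert assms, auto simp: ulsub_def Sig_def hv_def ov_def scalar_prod_def)

lemma Ik_ov: assumes "k \<le> p" shows "Ik k k p * ov p = ov k"
proof (rule eq_matI)
  fix i j assume ij: "i < dim_row (ov k)" "j < dim_col (ov k)"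
  hence i: "i < k" and j: "j = 0" by auto
  have "(Ik k k p * ov p) $$ (i,j) = (\<Sum>c\<in>{0..<p}. (if i = c \<and> i < k then 1 else 0))"
    using i j assms by (simp add: Ik_def ov_def scalar_prod_def)
  also have "\<dots> = (\<Sum>c\<in>{0..<p}. (if c = i then 1 else 0))" using i by (intro sum.cong) auto
  also have "\<dots> = 1" using i assms by simp
  finally show "(Ik k k p * ov p) $$ (i,j) = ov k $$ (i,j)" using i j by (simp add: ov_def)
qed auto

lemma Umat_dbm: assumes p: "0 < p" shows "Umat n p = diag_block_mat (map (\<lambda>u. ov p) [0..<n])"
proof (induction n)
  case 0 thus ?case by (auto intro!: eq_matI simp: Umat_def)
next
  case (Suc n)
  have "diag_block_mat (map (\<lambda>u. ov p) [0..<Suc n]) = four_block_mat (Umat n p)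
     (0\<^sub>m (n * p) 1) (0\<^sub>m p n) (ov p)"
    by (simp add: diag_block_mat_last Suc[symmetric] Let_def Umat_def)
  also have "\<dots> = Umat (Suc n) p"
  proof (rule eq_matI)
    fix i j assume "i < dim_row (Umat (Suc n) p)" "j < dim_col (Umat (Suc n) p)"
    hence i: "i < n * p + p" and j: "j < n + 1" by (auto simp: Umat_def)
    show "four_block_mat (Umat n p) (0\<^sub>m (n * p) 1) (0\<^sub>m p n) (ov p) $$ (i,j) = Umat (Suc n) p $$ (i,j)"
    proof (cases "i < n * p")
      case True
      hence "i div p < n" by (simp add: less_mult_imp_div_less)
      thus ?thesis using True i j by (auto simp: Umat_def)
    next
      case False
      hence "i div p = n" using i p
        by (metis add.commute div_nat_eqI mult.commute mult_Suc not_less)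
      thus ?thesis using False i j p by (auto simp: Umat_def ov_def)
    qed
  qed (auto simp: Umat_def)
  finally show ?case ..
qed

lemma hcat_mult: assumes "dim_row X = dim_col A" "dim_row Y = dim_col A"
  shows "hcat (A * X) (A * Y) = A * hcat X Y"
proof (rule eq_matI)
  fix i j assume ij: "i < dim_row (A * hcat X Y)" "j < dim_col (A * hcat X Y)"
  hence i: "i < dim_row A" and j: "j < dim_col X + dim_col Y" by (auto simp: hcat_def)
  show "hcat (A * X) (A * Y) $$ (i,j) = (A * hcat X Y) $$ (i,j)"
  proof (cases "j < dim_col X")
    case True
    have "col (hcat X Y) j = col X j" using True assms by (auto intro!: eq_vecI simp: hcat_def)
    thus ?thesis using True i j by (simp add: hcat_def)
  next
    case False
    have "col (hcat X Y) j = col Y (j - dim_col X)" using False j assms by (auto intro!: eq_vecI simp: hcat_def)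
    thus ?thesis using False i j by (simp add: hcat_def)
  qed
qed (auto simp: hcat_def)

lemma hcat_sel: assumes "dim_row A = dim_row B"
  shows "hcat A B * mat (dim_col A + dim_col B) (dim_col B) (\<lambda>(i,j). if i = dim_col A + j then 1 else 0) = (B :: real mat)"
proof (rule eq_matI)
  fix i j assume ij: "i < dim_row B" "j < dim_col B"
  have "(hcat A B * mat (dim_col A + dim_col B) (dim_col B) (\<lambda>(i,j). if i = dim_col A + j then 1 else 0)) $$ (i,j)
    = (\<Sum>k\<in>{0..<dim_col A + dim_col B}. hcat A B $$ (i,k) * (if k = dim_col A + j then 1 else 0))"
    using ij assms by (simp add: hcat_def scalar_prod_def)
  also have "\<dots> = (\<Sum>k\<in>{0..<dim_col A + dim_col B}. if k = dim_col A + j then hcat A B $$ (i,k) else 0)"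
    by (intro sum.cong) auto
  also have "\<dots> = hcat A B $$ (i, dim_col A + j)" using ij by simp
  also have "\<dots> = B $$ (i,j)" using ij assms by (simp add: hcat_def)
  finally show "(hcat A B * mat (dim_col A + dim_col B) (dim_col B) (\<lambda>(i,j). if i = dim_col A + j then 1 else 0)) $$ (i,j) = B $$ (i,j)" .
qed (use assms in \<open>auto simp: hcat_def\<close>)

lemma Ik_mult_left: assumes "dim_row A = p" "k \<le> p"
  shows "Ik k k p * A = mat k (dim_col A) (\<lambda>(i,j). A $$ (i,j))"
proof (rule eq_matI)
  fix i j assume "i < dim_row (mat k (dim_col A) (\<lambda>(i,j). A $$ (i,j)))" "j < dim_col (mat k (dim_col A) (\<lambda>(i,j). A $$ (i,j)))"
  hence i: "i < k" and j: "j < dim_col A" by auto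
  have "(Ik k k p * A) $$ (i,j) = (\<Sum>c\<in>{0..<p}. (if i = c \<and> i < k then 1 else 0) * A $$ (c,j))"
    using i j assms by (simp add: Ik_def scalar_prod_def)
  also have "\<dots> = (\<Sum>c\<in>{0..<p}. (if c = i then A $$ (i,j) else 0))" using i by (intro sum.cong) auto
  also have "\<dots> = A $$ (i,j)" using i assms by simp
  finally show "(Ik k k p * A) $$ (i,j) = mat k (dim_col A) (\<lambda>(i,j). A $$ (i,j)) $$ (i,j)" using i j by simp
qed (use assms in auto)

lemma Ik_mult_right: assumes "dim_col A = p" "k \<le> p"
  shows "A * transpose_mat (Ik k k p) = mat (dim_row A) k (\<lambda>(i,j). A $$ (i,j))"
proof (rule eq_matI)
  fix i j assume "i < dim_row (mat (dim_row A) k (\<lambda>(i,j). A $$ (i,j)))" "j < dim_col (mat (dim_row A) k (\<lambda>(i,j). A $$ (i,j)))"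
  hence i: "i < dim_row A" and j: "j < k" by auto
  have "(A * transpose_mat (Ik k k p)) $$ (i,j) = (\<Sum>c\<in>{0..<p}. A $$ (i,c) * (if j = c \<and> j < k then 1 else 0))"
    using i j assms by (simp add: Ik_def scalar_prod_def)
  also have "\<dots> = (\<Sum>c\<in>{0..<p}. (if c = j then A $$ (i,j) else 0))" using j by (intro sum.cong) auto
  also have "\<dots> = A $$ (i,j)" using j assms by simp
  finally show "(A * transpose_mat (Ik k k p)) $$ (i,j) = mat (dim_row A) k (\<lambda>(i,j). A $$ (i,j)) $$ (i,j)" using i j by simp
qed (use assms in auto)

lemma ulsub_conj: assumes "A \<in> carrier_mat p p" "k \<le> p"
  shows "ulsub k A = Ik k k p * A * transpose_mat (Ik k k p)"
  using assms by (auto simp: Ik_mult_left Ik_mult_right ulsub_def intro!: eq_matI)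

lemma pd_nnd: assumes "pd_mat p A" shows "nnd_mat p A"
proof -
  have c: "A \<in> carrier_mat p p" "transpose_mat A = A"
    and pos: "\<And>v. v \<in> carrier_vec p \<Longrightarrow> v \<noteq> 0\<^sub>v p \<Longrightarrow> v \<bullet> (A *\<^sub>v v) > 0"
    using assms unfolding pd_mat_def by blast+
  have "v \<bullet> (A *\<^sub>v v) \<ge> 0" if v: "v \<in> carrier_vec p" for v
  proof (cases "v = 0\<^sub>v p")
    case True thus ?thesis using c by simp
  next
    case False thus ?thesis using pos[OF v] by (simp add: less_imp_le)
  qed
  thus ?thesis unfolding nnd_mat_def using c by blast
qed

lemma pd_ulsub: assumes pd: "pd_mat p A" and k: "k \<le> p"
  shows "pd_mat k (ulsub k A)"
proof -
  have A: "A \<in> carrier_mat p p" and sym: "transpose_mat A = A"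
    and pos: "\<And>v. v \<in> carrier_vec p \<Longrightarrow> v \<noteq> 0\<^sub>v p \<Longrightarrow> v \<bullet> (A *\<^sub>v v) > 0"
    using pd unfolding pd_mat_def by blast+
  define E where "E = Ik k k p"
  have E: "E \<in> carrier_mat k p" unfolding E_def carrier_mat_def by simp
  have U: "ulsub k A = E * A * transpose_mat E" unfolding E_def by (rule ulsub_conj[OF A k])
  have "transpose_mat (ulsub k A) = ulsub k A"
  proof (rule eq_matI)
    fix i j assume "i < dim_row (ulsub k A)" "j < dim_col (ulsub k A)"
    hence ij: "i < k" "j < k" by (auto simp: ulsub_def)
    have "A $$ (j,i) = transpose_mat A $$ (i,j)" using ij k A by auto
    thus "transpose_mat (ulsub k A) $$ (i,j) = ulsub k A $$ (i,j)" using ij sym by (simp add: ulsub_def)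
  qed (auto simp: ulsub_def)
  moreover have "v \<bullet> (ulsub k A *\<^sub>v v) > 0" if v: "v \<in> carrier_vec k" and v0: "v \<noteq> 0\<^sub>v k" for v
  proof -
    define w where "w = transpose_mat E *\<^sub>v v"
    have w: "w \<in> carrier_vec p" unfolding w_def using E v by auto
    have wi: "w $ i = v $ i" if "i < k" for i
    proof -
      have "w $ i = (\<Sum>c\<in>{0..<k}. (if c = i \<and> c < k then 1 else 0) * v $ c)"
        unfolding w_def E_def using that k v by (simp add: Ik_def scalar_prod_def)
      also have "\<dots> = (\<Sum>c\<in>{0..<k}. if c = i then v $ i else 0)" by (intro sum.cong) auto
      finally show ?thesis using that by simp
    qed
    have w0: "w \<noteq> 0\<^sub>v p"
    proof
      assume "w = 0\<^sub>v p"
      hence "\<forall>i<k. v $ i = 0" using wi k by auto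
      thus False using v v0 by (auto intro!: eq_vecI)
    qed
    have "ulsub k A *\<^sub>v v = E *\<^sub>v (A *\<^sub>v w)" unfolding U w_def
    proof -
      have "(E * A * transpose_mat E) *\<^sub>v v = (E * A) *\<^sub>v (transpose_mat E *\<^sub>v v)"
        by (rule assoc_mult_mat_vec[of _ k p _ k]) (use E A v in auto)
      also have "\<dots> = E *\<^sub>v (A *\<^sub>v (transpose_mat E *\<^sub>v v))"
        by (rule assoc_mult_mat_vec[of _ k p _ p]) (use E A v in auto)
      finally show "(E * A * transpose_mat E) *\<^sub>v v = E *\<^sub>v (A *\<^sub>v (transpose_mat E *\<^sub>v v))" .
    qed
    hence "v \<bullet> (ulsub k A *\<^sub>v v) = w \<bullet> (A *\<^sub>v w)"
      unfolding w_def using transpose_vec_mult_scalar[OF E _ v, of "A *\<^sub>v (transpose_mat E *\<^sub>v v)"] A E v by simp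
    thus ?thesis using pos[OF w w0] by simp
  qed
  moreover have "ulsub k A \<in> carrier_mat k k" by (simp add: ulsub_def)
  ultimately show ?thesis unfolding pd_mat_def by blast
qed

lemma pd_inv: assumes pd: "pd_mat k A"
  shows "\<exists>B. B \<in> carrier_mat k k \<and> A * B = 1\<^sub>m k \<and> B * A = 1\<^sub>m k"
proof -
  have A: "A \<in> carrier_mat k k" using pd unfolding pd_mat_def by auto
  have "det A \<noteq> 0"
  proof
    assume "det A = 0"
    then obtain v where v: "v \<in> carrier_vec k" "v \<noteq> 0\<^sub>v k" "A *\<^sub>v v = 0\<^sub>v k"
      using det_0_iff_vec_prod_zero[OF A] by auto
    hence "v \<bullet> (A *\<^sub>v v) = 0" by simp
    thus False using pd v unfolding pd_mat_def by auto
  qed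
  from det_non_zero_imp_unit[OF A this, of "()"]
  show ?thesis unfolding Units_def by (auto simp: ring_mat_simps)
qed

lemma minv_spec: assumes "pd_mat k A"
  shows "minv A \<in> carrier_mat k k" "A * minv A = 1\<^sub>m k" "minv A * A = 1\<^sub>m k"
proof -
  have d: "dim_row A = k" using assms unfolding pd_mat_def by auto
  from someI_ex[OF pd_inv[OF assms]]
  show "minv A \<in> carrier_mat k k" "A * minv A = 1\<^sub>m k" "minv A * A = 1\<^sub>m k"
    unfolding minv_def d by auto
qed

lemma gram_nnd: assumes R: "R \<in> carrier_mat a b"
  shows "nnd_mat b (transpose_mat R * R)"
  unfolding nnd_mat_def
proof (intro conjI ballI)
  show "transpose_mat R * R \<in> carrier_mat b b" using R by auto
  show "transpose_mat (transpose_mat R * R) = transpose_mat R * R" using R by (simp add: msimps)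
  fix v :: "real vec" assume v: "v \<in> carrier_vec b"
  have "v \<bullet> ((transpose_mat R * R) *\<^sub>v v) = (R *\<^sub>v v) \<bullet> (R *\<^sub>v v)"
  proof -
    have "(transpose_mat R * R) *\<^sub>v v = transpose_mat R *\<^sub>v (R *\<^sub>v v)"
      using R v by (simp add: assoc_mult_mat_vec[of _ b a _ b])
    moreover have "(transpose_mat (transpose_mat R) *\<^sub>v v) \<bullet> (R *\<^sub>v v) = v \<bullet> (transpose_mat R *\<^sub>v (R *\<^sub>v v))"
      by (rule transpose_vec_mult_scalar[of "transpose_mat R" b a], insert R v, auto)
    ultimately show ?thesis by simp
  qed
  also have "\<dots> \<ge> 0" by (simp add: scalar_prod_def sum_nonneg)
  finally show "v \<bullet> ((transpose_mat R * R) *\<^sub>v v) \<ge> 0" .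
qed

definition O0 :: "nat \<Rightarrow> nat \<Rightarrow> (nat \<Rightarrow> nat) \<Rightarrow> real mat" where
  "O0 p n l = (let M = Mmat p n l; Y = hcat (M * Zmat n p) (M * Umat n p) in
     transpose_mat M * (1\<^sub>m (dim_row Y) - Y * ginv (transpose_mat Y * Y) * transpose_mat Y) * M)"

lemma ginv_spec: assumes A: "A \<in> carrier_mat q q" and sym: "transpose_mat A = A"
  shows "ginv A \<in> carrier_mat q q" "A * ginv A * A = A"
proof -
  have d: "dim_col A = q" "dim_row A = q" using A by auto
  from someI_ex[OF ginv_exists[OF A sym]]
  show "ginv A \<in> carrier_mat q q" "A * ginv A * A = A" unfolding ginv_def d by auto
qed

lemma msqrt_spec: assumes "nnd_mat m W"
  shows "nnd_mat m (msqrt W)" "msqrt W * msqrt W = W"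
proof -
  have d: "dim_row W = m" using assms unfolding nnd_mat_def by auto
  from someI_ex[OF sqrt_exists[OF assms]]
  show "nnd_mat m (msqrt W)" "msqrt W * msqrt W = W" unfolding msqrt_def d by auto
qed

lemma sum_list_const: "sum_list (map (\<lambda>u. c) xs) = length xs * (c :: nat)"
  by (induction xs) auto

lemma blk_gram:
  assumes pd: "pd_mat p Sg" and k: "k \<le> p" and T: "T \<in> carrier_mat p p" "transpose_mat T = T" "T * T = Sg"
  shows "transpose_mat (T * transpose_mat (Ik k k p) * minv (ulsub k Sg)) * (T * transpose_mat (Ik k k p) * minv (ulsub k Sg))
     = minv (ulsub k Sg)"
proof -
  define E where "E = Ik k k p"
  define Sk where "Sk = ulsub k Sg"
  define Wk where "Wk = minv Sk"
  have Sg: "Sg \<in> carrier_mat p p" using pd unfolding pd_mat_def by auto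
  have pdk: "pd_mat k Sk" unfolding Sk_def by (rule pd_ulsub[OF pd k])
  have Wk: "Wk \<in> carrier_mat k k" "Sk * Wk = 1\<^sub>m k" unfolding Wk_def using minv_spec[OF pdk] by auto
  have SkT: "transpose_mat Sk = Sk" and Skc: "Sk \<in> carrier_mat k k" using pdk unfolding pd_mat_def by auto
  have Skd: "Sk = E * Sg * transpose_mat E" unfolding Sk_def E_def by (rule ulsub_conj[OF Sg k])
  have d: "dim_row E = k" "dim_col E = p" "dim_row Sg = p" "dim_col Sg = p" "dim_row T = p" "dim_col T = p"
    "dim_row Wk = k" "dim_col Wk = k" "dim_row Sk = k" "dim_col Sk = k"
    using Sg T Wk Skc unfolding E_def by auto
  have WkT: "transpose_mat Wk = Wk"
  proof -
    have "transpose_mat Wk * Sk = transpose_mat (transpose_mat Sk * Wk)" using d by (simp add: msimps)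
    also have "\<dots> = 1\<^sub>m k" unfolding SkT Wk(2) by simp
    finally have 1: "transpose_mat Wk * Sk = 1\<^sub>m k" .
    have "transpose_mat Wk = transpose_mat Wk * (Sk * Wk)" using Wk(2) d by simp
    also have "\<dots> = (transpose_mat Wk * Sk) * Wk" using d by (simp add: msimps)
    also have "\<dots> = Wk" unfolding 1 using d by simp
    finally show ?thesis .
  qed
  have TTx: "T * (T * X) = Sg * X" if "dim_row X = p" for X
  proof -
    have "T * T * X = Sg * X" using T by simp
    thus ?thesis using d that by (simp add: msimps)
  qed
  have ESx: "E * (Sg * (transpose_mat E * X)) = Sk * X" if "dim_row X = k" for X
    unfolding Skd using d that by (simp add: msimps)
  have "transpose_mat (T * transpose_mat E * Wk) * (T * transpose_mat E * Wk) = transpose_mat Wk * (E * (T * (T * (transpose_mat E * Wk))))"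
    using d T(2) by (simp add: msimps)
  also have "\<dots> = transpose_mat Wk * (Sk * Wk)" using d by (simp add: TTx ESx)
  also have "\<dots> = Wk" unfolding Wk(2) WkT using d by simp
  finally show ?thesis unfolding E_def Wk_def Sk_def .
qed

lemma Omat_eq:
  assumes pd: "pd_mat p (Sig \<eta> p)" and l: "\<forall>u<n. l u \<in> {1..p}" and p: "0 < p"
  shows "Omat (Sig \<eta> p) p n l = O0 p n l"
proof -
  define \<Sigma> where "\<Sigma> = Sig \<eta> p"
  define xs where "xs = [0..<n]"
  define m where "m = sum_list (map l xs)"
  have lx: "\<And>u. u \<in> set xs \<Longrightarrow> l u \<le> p \<and> 1 \<le> l u" using l unfolding xs_def by auto
  define M where "M = Mmat p n l"
  define Z where "Z = Zmat n p"
  define U where "U = Umat n p"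
  have Mdef: "M = diag_block_mat (map (\<lambda>u. Ik (l u) (l u) p) xs)" unfolding M_def Mmat_def xs_def ..
  have Ud: "U = diag_block_mat (map (\<lambda>u. ov p) xs)" unfolding U_def xs_def by (rule Umat_dbm[OF p])
  have dM: "dim_row M = m" "dim_col M = n * p" unfolding Mdef dbm_dims m_def
    by (simp_all add: sum_list_const xs_def)
  have dZ: "dim_row Z = n * p" "dim_col Z = p" unfolding Z_def Zmat_def by auto
  have dU: "dim_row U = n * p" "dim_col U = n" unfolding U_def Umat_def by auto
  have MU: "M * U = diag_block_mat (map (\<lambda>u. ov (l u)) xs)"
    unfolding Mdef Ud by (subst dbm_mult, simp, intro arg_cong[where f = diag_block_mat] map_cong refl) (simp add: Ik_ov lx)
  define Y where "Y = hcat (M * Z) (M * U)"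
  have dY: "dim_row Y = m" "dim_col Y = p + n" unfolding Y_def hcat_def using dM dZ dU by auto
  define C where "C = mat (p + n) n (\<lambda>(i,j). if i = p + j then (1::real) else 0)"
  have dC: "dim_row C = p + n" "dim_col C = n" unfolding C_def by auto
  have YC: "Y * C = M * U" unfolding Y_def C_def
    using hcat_sel[of "M * Z" "M * U"] dM dZ dU by simp
  define H where "H = diag_block_mat (map (\<lambda>u. hv \<eta> (l u)) xs)"
  have dH: "dim_row H = m" "dim_col H = n" unfolding H_def dbm_dims m_def
    by (simp_all add: sum_list_const xs_def)
  define Sobs where "Sobs = diag_block_mat (map (\<lambda>u. ulsub (l u) \<Sigma>) xs)"
  have Sobs_eq: "Sobs = 1\<^sub>m m + H * transpose_mat (Y * C) + (Y * C) * transpose_mat H"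
  proof -
    have "Sobs = diag_block_mat (map (\<lambda>u. (1\<^sub>m (l u) + hv \<eta> (l u) * transpose_mat (ov (l u)))
       + ov (l u) * transpose_mat (hv \<eta> (l u))) xs)"
      unfolding Sobs_def \<Sigma>_def using lx by (intro arg_cong[where f = diag_block_mat] map_cong refl) (simp add: ulsub_Sig)
    also have "\<dots> = diag_block_mat (map (\<lambda>u. 1\<^sub>m (l u) + hv \<eta> (l u) * transpose_mat (ov (l u))) xs)
       + diag_block_mat (map (\<lambda>u. ov (l u) * transpose_mat (hv \<eta> (l u))) xs)"
      by (subst dbm_add) auto
    also have "diag_block_mat (map (\<lambda>u. 1\<^sub>m (l u) + hv \<eta> (l u) * transpose_mat (ov (l u))) xs)
       = diag_block_mat (map (\<lambda>u. 1\<^sub>m (l u)) xs) + diag_block_mat (map (\<lambda>u. hv \<eta> (l u) * transpose_mat (ov (l u))) xs)"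
      by (subst dbm_add) auto
    also have "diag_block_mat (map (\<lambda>u. 1\<^sub>m (l u)) xs) = (1\<^sub>m m :: real mat)" unfolding m_def using dbm_one[of l xs] by simp
    also have "diag_block_mat (map (\<lambda>u. hv \<eta> (l u) * transpose_mat (ov (l u))) xs) = H * transpose_mat (Y * C)"
      unfolding YC MU H_def dbm_transpose by (subst dbm_mult) auto
    also have "diag_block_mat (map (\<lambda>u. ov (l u) * transpose_mat (hv \<eta> (l u))) xs) = (Y * C) * transpose_mat H"
      unfolding YC MU H_def dbm_transpose by (subst dbm_mult) auto
    finally show ?thesis .
  qed
  have pdk: "\<And>u. u \<in> set xs \<Longrightarrow> pd_mat (l u) (ulsub (l u) \<Sigma>)"
    using pd_ulsub[OF pd[folded \<Sigma>_def]] lx by auto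
  define W where "W = Wmat \<Sigma> n l"
  have Wd: "W = diag_block_mat (map (\<lambda>u. minv (ulsub (l u) \<Sigma>)) xs)" unfolding W_def Wmat_def xs_def ..
  have mc: "dim_row (minv (ulsub (l u) \<Sigma>)) = l u" "dim_col (minv (ulsub (l u) \<Sigma>)) = l u" if "u \<in> set xs" for u
    using minv_spec(1)[OF pdk[OF that]] by auto
  have dW: "dim_row W = m" "dim_col W = m" unfolding Wd dbm_dims m_def
    using mc by (auto intro!: arg_cong[where f = sum_list])
  have SW: "Sobs * W = 1\<^sub>m m"
  proof -
    have "Sobs * W = diag_block_mat (map (\<lambda>u. ulsub (l u) \<Sigma> * minv (ulsub (l u) \<Sigma>)) xs)"
      unfolding Sobs_def Wd by (subst dbm_mult) (use mc in \<open>auto simp: ulsub_def\<close>)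
    also have "\<dots> = diag_block_mat (map (\<lambda>u. 1\<^sub>m (l u) :: real mat) xs)"
      using minv_spec(2)[OF pdk] by (intro arg_cong[where f = diag_block_mat] map_cong) auto
    also have "\<dots> = 1\<^sub>m m" unfolding m_def using dbm_one[of l xs] by simp
    finally show ?thesis .
  qed
  obtain T where Tn: "nnd_mat p T" and TT: "T * T = \<Sigma>"
    using sqrt_exists[OF pd_nnd[OF pd[folded \<Sigma>_def]]] by auto
  have T: "T \<in> carrier_mat p p" "transpose_mat T = T" using Tn unfolding nnd_mat_def by auto
  define Rk where "Rk = (\<lambda>u. T * transpose_mat (Ik (l u) (l u) p) * minv (ulsub (l u) \<Sigma>))"
  define R where "R = diag_block_mat (map Rk xs)"
  have dRk: "dim_row (Rk u) = p" "dim_col (Rk u) = l u" if "u \<in> set xs" for u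
    unfolding Rk_def using mc[OF that] T by auto
  have "sum_list (map (\<lambda>x. dim_row (Rk x)) xs) = sum_list (map (\<lambda>x. p) xs)"
    using dRk by (intro arg_cong[where f = sum_list] map_cong) auto
  hence dR1: "dim_row R = n * p" unfolding R_def dbm_dims by (simp add: sum_list_const xs_def)
  have dR: "dim_row R = n * p" "dim_col R = m" unfolding R_def dbm_dims m_def
    using dRk dR1[unfolded R_def dbm_dims] by (auto intro!: arg_cong[where f = sum_list])
  have WR: "W = transpose_mat R * R"
  proof -
    have "W = diag_block_mat (map (\<lambda>u. transpose_mat (Rk u) * Rk u) xs)" unfolding Wd
      using blk_gram[OF pd[folded \<Sigma>_def] _ T TT] lx unfolding Rk_def
      by (intro arg_cong[where f = diag_block_mat] map_cong refl) auto
    also have "\<dots> = diag_block_mat (map (\<lambda>u. transpose_mat (Rk u)) xs) * diag_block_mat (map Rk xs)"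
      by (subst dbm_mult) (use dRk in auto)
    also have "\<dots> = transpose_mat R * R" unfolding R_def dbm_transpose ..
    finally show ?thesis .
  qed
  have Wnnd: "nnd_mat m W" unfolding WR by (rule gram_nnd[of _ "n * p"]) (use dR in auto)
  define S where "S = msqrt W"
  have Snnd: "nnd_mat m S" and SS: "S * S = W" unfolding S_def using msqrt_spec[OF Wnnd] by auto
  have Sc: "S \<in> carrier_mat m m" and ST: "transpose_mat S = S" using Snnd unfolding nnd_mat_def by auto
  have Sobsc: "Sobs \<in> carrier_mat m m" unfolding Sobs_eq using dH dY dC by auto
  have Yc: "Y \<in> carrier_mat m (p + n)" using dY by auto
  have Cc: "C \<in> carrier_mat (p + n) n" using dC by auto
  have Hc: "H \<in> carrier_mat m n" using dH by auto
  define B where "B = S * Y"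
  have Bc: "B \<in> carrier_mat m (p + n)" unfolding B_def using Sc Yc by auto
  have BB: "transpose_mat B * B \<in> carrier_mat (p + n) (p + n)" "transpose_mat (transpose_mat B * B) = transpose_mat B * B"
    using Bc by (auto simp: msimps)
  have YY: "transpose_mat Y * Y \<in> carrier_mat (p + n) (p + n)" "transpose_mat (transpose_mat Y * Y) = transpose_mat Y * Y"
    using Yc by (auto simp: msimps)
  note G1 = ginv_spec[OF BB]
  note G2 = ginv_spec[OF YY]
  have coreq: "S * (1\<^sub>m m - B * ginv (transpose_mat B * B) * transpose_mat B) * S = 1\<^sub>m m - Y * ginv (transpose_mat Y * Y) * transpose_mat Y"
    unfolding B_def
    by (rule core[OF Sc ST Sobsc _ Yc Cc Hc Sobs_eq G1(1)[unfolded B_def] G1(2)[unfolded B_def] G2], use SW SS in simp)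
  have hc: "hcat (S * M * Z) (S * M * U) = B"
    unfolding B_def Y_def using dM dZ dU Sc by (simp add: massoc hcat_mult)
  have "Omat \<Sigma> p n l = transpose_mat M * S * pr_perp B * S * M"
    unfolding Omat_def Let_def M_def[symmetric] W_def[symmetric] S_def[symmetric] Z_def[symmetric] U_def[symmetric] hc ..
  also have "pr_perp B = 1\<^sub>m m - B * ginv (transpose_mat B * B) * transpose_mat B"
    unfolding pr_perp_def using Bc by simp
  also have "transpose_mat M * S * (1\<^sub>m m - B * ginv (transpose_mat B * B) * transpose_mat B) * S * M
     = transpose_mat M * (S * (1\<^sub>m m - B * ginv (transpose_mat B * B) * transpose_mat B) * S) * M"
    using dM Sc Bc G1(1) by (simp add: massoc)
  also have "\<dots> = O0 p n l" unfolding coreq O0_def Let_def M_def[symmetric] Z_def[symmetric] U_def[symmetric] Y_def[symmetric]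
    using dY by simp
  finally show ?thesis unfolding \<Sigma>_def .
qed

lemma pd_one: "pd_mat p (1\<^sub>m p)"
  unfolding pd_mat_def
proof (intro conjI ballI impI)
  fix v :: "real vec" assume v: "v \<in> carrier_vec p" and v0: "v \<noteq> 0\<^sub>v p"
  have "v \<bullet> v \<noteq> 0" using self_scalar_zero[OF v] v0 by auto
  moreover have "v \<bullet> v \<ge> 0" by (simp add: scalar_prod_def sum_nonneg)
  ultimately show "0 < v \<bullet> (1\<^sub>m p *\<^sub>v v)" using v by simp
qed auto

lemma Cd_eq:
  assumes "\<And>l. l \<in> PiE {0..<n} (\<lambda>_. {1..p}) \<Longrightarrow> Omat S1 p n l = Omat S0 p n l"
  shows "Cd S1 p t n a d = Cd S0 p t n a d"
proof -
  have "Cexp S1 p t n a d i j = Cexp S0 p t n a d i j" for i j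
    unfolding Cexp_def Cl_def using assms
    by (intro eq_matI) (auto intro!: sum.cong)
  thus ?thesis unfolding Cd_def by simp
qed

theorem corollary2p1:
  fixes p t n :: nat and a :: "nat \<Rightarrow> real" and \<Phi> :: "real mat \<Rightarrow> real"
    and \<eta> :: "nat \<Rightarrow> real" and d :: "nat \<Rightarrow> nat \<Rightarrow> nat"
  assumes "dropout_dist p a"
    and "criterion t \<Phi>"
    and "pd_mat p (mat p p (\<lambda>(i,j). (if i = j then 1 else 0) + \<eta> i + \<eta> j))"
    and "phi1_optimal \<Phi> (1\<^sub>m p) p t n a d"
  shows "phi1_optimal \<Phi> (mat p p (\<lambda>(i,j). (if i = j then 1 else 0) + \<eta> i + \<eta> j)) p t n a d"
proof -
  have p: "0 < p"
  proof (rule ccontr)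
    assume "\<not> 0 < p"
    hence "p = 0" by simp
    thus False using assms(1) unfolding dropout_dist_def by simp
  qed
  have S1: "mat p p (\<lambda>(i,j). (if i = j then 1 else 0) + \<eta> i + \<eta> j) = Sig \<eta> p" unfolding Sig_def ..
  have S0: "1\<^sub>m p = Sig (\<lambda>_. 0) p" unfolding Sig_def by (rule eq_matI) auto
  have pd1: "pd_mat p (Sig \<eta> p)" using assms(3) unfolding S1 .
  have pd0: "pd_mat p (Sig (\<lambda>_. 0) p)" using pd_one[of p] unfolding S0 .
  have "Omat (Sig \<eta> p) p n l = Omat (Sig (\<lambda>_. 0) p) p n l" if "l \<in> PiE {0..<n} (\<lambda>_. {1..p})" for l
  proof -
    have l: "\<forall>u<n. l u \<in> {1..p}" using that by auto
    show ?thesis using Omat_eq[OF pd1 l p] Omat_eq[OF pd0 l p] by simp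
  qed
  hence Cd: "Cd (Sig \<eta> p) p t n a d' = Cd (1\<^sub>m p) p t n a d'" for d'
    unfolding S0 by (rule Cd_eq)
  show ?thesis using assms(4) unfolding S1 phi1_optimal_def Cd by simp
qed

end
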